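(* Let $L=\langle w_0,\dots,w_l\rangle^\perp\subseteq\mathbb{Z}^N$ be a $p/q$-changemaker lattice with stable coefficients $(\rho_1,\dots,\rho_t)$, $2\le\rho_1\le\dots\le\rho_t$. Let $\phi:L\to\mathbb{Z}^N$ be an isometric embedding such that $\phi(L)=\langle w_0',\dots,w_l'\rangle^\perp\subseteq\mathbb{Z}^N$ is a $p/q$-changemaker lattice. If $p/q\ge 2+2\rho_t+\sum_{i=1}^t\rho_i^2$, then $w_0$ and $w_0'$ have the same changemaker coefficients.
   Context: $p/q$-changemaker lattice ($p/q>0$): write $p/q=[a_0,\dots,a_l]^-=a_0-1/(a_1-1/(\cdots-1/a_l))$ with $a_0\ge1$, $a_i\ge2$ for $i\ge1$. Vectors $w_0,\dots,w_l\in\mathbb{Z}^N$ with $w_i\cdot w_i=a_i$, $w_i\cdot w_j=-1$ if $|i-j|=1$, $0$ if $|i-j|>1$, and an orthonormal basis $e_1,\dots,e_N$ such that: (I) there is a non-decreasing tuple $(\sigma_1,\dots,\sigma_t)$ of positive integers satisfying the changemaker condition (every $1\le m\le\sum\sigma_i$ is a sum of a subset of the $\sigma_i$) with $w_0=\sum_{i\le t}\sigma_ie_i$ if $l=0$ and $w_0=e_{t+1}+\sum_{i\le t}\sigma_ie_i$ if $l>0$; (II) $|w_k\cdot e_i|\le1$ for $k\ge1$; (III) for $i<j$, $w_i\cdot w_j=-|I_i\cap I_j|$ with $I_k=\{e_j:w_k\cdot e_j\neq0\}$; (IV) each $e_i$ pairs non-trivially with some $w_k$. Then $\langle w_0,\dots,w_l\rangle^\perp$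 is a $p/q$-changemaker lattice; the $\sigma_i$ are the changemaker coefficients (of $w_0$) and those $\sigma_i>1$ the stable coefficients. *)

theory Defs
  imports Complex_Main
begin

text \<open>Vectors of Z^N are modelled as functions nat => int vanishing at indices >= N
  (coordinates 0..N-1).\<close>

definition ZN :: "nat \<Rightarrow> (nat \<Rightarrow> int) set" where
  "ZN N = {v. \<forall>i\<ge>N. v i = 0}"

definition ip :: "nat \<Rightarrow> (nat \<Rightarrow> int) \<Rightarrow> (nat \<Rightarrow> int) \<Rightarrow> int" where
  "ip N v u = (\<Sum>i<N. v i * u i)"

fun hjcf :: "int list \<Rightarrow> rat" where
  "hjcf [] = 0"
| "hjcf [x] = of_int x"
| "hjcf (x # y # ys) = of_int x - 1 / hjcf (y # ys)"

definition changemaker :: "int list \<Rightarrow> bool" where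
  "changemaker \<sigma> \<longleftrightarrow>
     (\<forall>m::int. 1 \<le> m \<and> m \<le> sum_list \<sigma> \<longrightarrow>
        (\<exists>S \<subseteq> {..<length \<sigma>}. (\<Sum>i\<in>S. \<sigma> ! i) = m))"

definition orthonormal_basis :: "nat \<Rightarrow> (nat \<Rightarrow> nat \<Rightarrow> int) \<Rightarrow> bool" where
  "orthonormal_basis N e \<longleftrightarrow>
     (\<forall>i\<in>{1..N}. e i \<in> ZN N) \<and>
     (\<forall>i\<in>{1..N}. \<forall>j\<in>{1..N}. ip N (e i) (e j) = (if i = j then 1 else 0)) \<and>
     (\<forall>v\<in>ZN N. v = (\<lambda>c. \<Sum>i=1..N. ip N v (e i) * e i c))"

definition perp :: "nat \<Rightarrow> nat \<Rightarrow> (nat \<Rightarrow> nat \<Rightarrow> int) \<Rightarrow> (nat \<Rightarrow> int) set" where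
  "perp N l w = {x \<in> ZN N. \<forall>k\<le>l. ip N x (w k) = 0}"

text \<open>Data of a p/q-changemaker lattice: r = p/q, a = [a_0,...,a_l] its expansion,
  vectors w_0..w_l, orthonormal basis e_1..e_N, changemaker coefficients sigma
  (sigma ! (i-1) is sigma_i).\<close>
definition cm_data :: "nat \<Rightarrow> rat \<Rightarrow> int list \<Rightarrow> (nat \<Rightarrow> nat \<Rightarrow> int)
    \<Rightarrow> (nat \<Rightarrow> nat \<Rightarrow> int) \<Rightarrow> int list \<Rightarrow> bool" where
  "cm_data N r a w e \<sigma> \<longleftrightarrow>
     (let l = length a - 1; t = length \<sigma> in
      r > 0 \<and> a \<noteq> [] \<and> hjcf a = r \<and> a ! 0 \<ge> 1 \<and> (\<forall>i\<in>{1..l}. a ! i \<ge> 2) \<and>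
      (\<forall>k\<le>l. w k \<in> ZN N) \<and>
      (\<forall>k\<le>l. ip N (w k) (w k) = a ! k) \<and>
      (\<forall>j\<le>l. \<forall>k\<le>l. (j + 1 = k \<or> k + 1 = j) \<longrightarrow> ip N (w j) (w k) = -1) \<and>
      (\<forall>j\<le>l. \<forall>k\<le>l. (j + 1 < k \<or> k + 1 < j) \<longrightarrow> ip N (w j) (w k) = 0) \<and>
      orthonormal_basis N e \<and>
      \<comment> \<open>(I)\<close>
      sorted \<sigma> \<and> (\<forall>x\<in>set \<sigma>. x > 0) \<and> changemaker \<sigma> \<and>
      (if l = 0 then t \<le> N \<and> w 0 = (\<lambda>c. \<Sum>i<t. \<sigma> ! i * e (i + 1) c)
       else t + 1 \<le> N \<and> w 0 = (\<lambda>c. e (t + 1) c + (\<Sum>i<t. \<sigma> ! i * e (i + 1) c))) \<and>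
      \<comment> \<open>(II)\<close>
      (\<forall>k\<in>{1..l}. \<forall>i\<in>{1..N}. \<bar>ip N (w k) (e i)\<bar> \<le> 1) \<and>
      \<comment> \<open>(III)\<close>
      (\<forall>i j. i < j \<and> j \<le> l \<longrightarrow>
         ip N (w i) (w j) =
           - int (card {c\<in>{1..N}. ip N (w i) (e c) \<noteq> 0 \<and> ip N (w j) (e c) \<noteq> 0})) \<and>
      \<comment> \<open>(IV)\<close>
      (\<forall>i\<in>{1..N}. \<exists>k\<le>l. ip N (w k) (e i) \<noteq> 0))"

definition stable_coeffs :: "int list \<Rightarrow> int list" where
  "stable_coeffs \<sigma> = filter (\<lambda>x. x > 1) \<sigma>"

definition isometric_embedding :: "nat \<Rightarrow> (nat \<Rightarrow> int) set \<Rightarrow> ((nat \<Rightarrow> int) \<Rightarrow> (nat \<Rightarrow> int)) \<Rightarrow> bool" where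
  "isometric_embedding N L \<phi> \<longleftrightarrow>
     (\<forall>x\<in>L. \<phi> x \<in> ZN N) \<and>
     (\<forall>x\<in>L. \<forall>y\<in>L. \<phi> (\<lambda>c. x c + y c) = (\<lambda>c. \<phi> x c + \<phi> y c)) \<and>
     (\<forall>x\<in>L. \<forall>y\<in>L. ip N (\<phi> x) (\<phi> y) = ip N x y)"

end

theory Submission
  imports Defs "HOL-Library.Multiset"
begin


definition pt :: "int \<Rightarrow> nat \<Rightarrow> int \<Rightarrow> nat \<Rightarrow> nat \<Rightarrow> int" where
  "pt \<alpha> p \<beta> q = (\<lambda>x. (if x = p then \<alpha> else 0) + (if x = q then \<beta> else 0))"

lemma sum_delta_mult:
  assumes "finite A" "p \<in> A"
  shows "(\<Sum>x\<in>A. (if x = p then (\<alpha>::int) else 0) * Y x) = \<alpha> * Y p"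
proof -
  have "(\<Sum>x\<in>A. (if x = p then (\<alpha>::int) else 0) * Y x) = (\<Sum>x\<in>A. if x = p then \<alpha> * Y p else 0)"
    by (rule sum.cong) auto
  thus ?thesis using assms by simp
qed

lemma sum_pt:
  assumes "finite A" "p \<in> A" "q \<in> A" "p \<noteq> q"
  shows "(\<Sum>x\<in>A. pt \<alpha> p \<beta> q x * Y x) = \<alpha> * Y p + \<beta> * Y q"
  using assms by (simp add: pt_def distrib_right sum.distrib sum_delta_mult)

lemma sq_ge1: "(x::int) \<noteq> 0 \<Longrightarrow> x^2 \<ge> 1"
  by (smt (verit) power2_eq_square mult_le_cancel_left1 zero_less_mult_iff)

lemma abs1_of_sq: "(x::int)^2 = 1 \<Longrightarrow> \<bar>x\<bar> = 1"
  by (auto simp: power2_eq_1_iff)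

lemma norm1:
  assumes "finite A" "(\<Sum>x\<in>A. (X x)^2) = (1::int)"
  shows "\<exists>g\<in>A. \<bar>X g\<bar> = 1 \<and> (\<forall>x\<in>A. x \<noteq> g \<longrightarrow> X x = 0)"
proof -
  obtain g where g: "g \<in> A" "X g \<noteq> 0"
    using assms by (metis (mono_tags, lifting) power_zero_numeral sum.neutral zero_neq_one)
  have split: "(\<Sum>x\<in>A. (X x)^2) = (X g)^2 + (\<Sum>x\<in>A-{g}. (X x)^2)"
    using assms g by (simp add: sum.remove)
  have nn: "(\<Sum>x\<in>A-{g}. (X x)^2) \<ge> 0" by (simp add: sum_nonneg)
  have "(X g)^2 \<ge> 1" using g sq_ge1 by blast
  hence g1: "(X g)^2 = 1" and r0: "(\<Sum>x\<in>A-{g}. (X x)^2) = 0" using split nn assms by linarith+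
  have "\<forall>x\<in>A-{g}. (X x)^2 = 0"
    using r0 sum_nonneg_eq_0_iff[of "A-{g}" "\<lambda>x. (X x)^2"] assms by simp
  moreover have "\<bar>X g\<bar> = 1" using abs1_of_sq[OF g1] .
  ultimately show ?thesis using g by auto
qed

lemma sq_ne2: "(x::int)^2 \<noteq> 2"
proof
  assume h: "x^2 = 2"
  have e: "x^2 = \<bar>x\<bar> * \<bar>x\<bar>" by (simp add: power2_eq_square abs_mult[symmetric])
  show False
  proof (cases "\<bar>x\<bar> \<le> 1")
    case True
    hence "\<bar>x\<bar> * \<bar>x\<bar> \<le> 1 * 1" by (intro mult_mono) auto
    thus False using h e by simp
  next
    case False
    hence "\<bar>x\<bar> * \<bar>x\<bar> \<ge> 2 * 2" by (intro mult_mono) auto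
    thus False using h e by simp
  qed
qed


lemma norm2:
  fixes X :: "nat \<Rightarrow> int"
  assumes "finite A" "(\<Sum>x\<in>A. (X x)^2) = (2::int)"
  shows "\<exists>p q \<alpha> \<beta>. p \<in> A \<and> q \<in> A \<and> p \<noteq> q \<and> \<bar>\<alpha>\<bar> = 1 \<and> \<bar>\<beta>\<bar> = 1 \<and> (\<forall>x\<in>A. X x = pt \<alpha> p \<beta> q x)"
proof -
  obtain g where g: "g \<in> A" "X g \<noteq> 0"
    using assms by (metis (mono_tags, lifting) power_zero_numeral sum.neutral zero_neq_numeral)
  have split: "(\<Sum>x\<in>A. (X x)^2) = (X g)^2 + (\<Sum>x\<in>A-{g}. (X x)^2)"
    using assms g by (simp add: sum.remove)
  have nn: "(\<Sum>x\<in>A-{g}. (X x)^2) \<ge> 0" by (simp add: sum_nonneg)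
  have "(X g)^2 \<ge> 1" using g sq_ge1 by blast
  moreover have "(X g)^2 \<noteq> 2" by (rule sq_ne2)
  ultimately have g1: "(X g)^2 = 1" and r1: "(\<Sum>x\<in>A-{g}. (X x)^2) = 1" using split nn assms by linarith+
  obtain q where q: "q \<in> A-{g}" "\<bar>X q\<bar> = 1" "\<forall>x\<in>A-{g}. x \<noteq> q \<longrightarrow> X x = 0"
    using norm1[OF _ r1] assms by auto
  obtain \<alpha> \<beta> where ab: "\<alpha> = X g" "\<beta> = X q" by blast
  have "\<forall>x\<in>A. X x = pt \<alpha> g \<beta> q x" using q ab by (auto simp: pt_def)
  moreover have "\<bar>\<alpha>\<bar> = 1" using abs1_of_sq[OF g1] ab by simp
  moreover have "g \<noteq> q" "q \<in> A" "\<bar>\<beta>\<bar> = 1" using q ab by auto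
  ultimately show ?thesis using g(1) by blast
qed

lemma pt_at:
  assumes "p \<noteq> q"
  shows "pt \<alpha> p \<beta> q p = \<alpha>" "pt \<alpha> p \<beta> q q = \<beta>" "x \<noteq> p \<Longrightarrow> x \<noteq> q \<Longrightarrow> pt \<alpha> p \<beta> q x = 0"
  using assms by (auto simp: pt_def)

lemma pt_swap: "p \<noteq> q \<Longrightarrow> pt \<alpha> p \<beta> q = pt \<beta> q \<alpha> p"
  by (auto simp: pt_def fun_eq_iff)

lemma norm2_le1:
  fixes X :: "nat \<Rightarrow> int"
  assumes "finite A" "(\<Sum>x\<in>A. (X x)^2) = (2::int)" "y \<in> A"
  shows "\<bar>X y\<bar> \<le> 1"
proof -
  obtain p q \<alpha> \<beta> where pq: "p \<in> A" "q \<in> A" "p \<noteq> q" "\<bar>\<alpha>\<bar> = 1" "\<bar>\<beta>\<bar> = 1" "\<forall>x\<in>A. X x = pt \<alpha> p \<beta> q x"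
    using norm2[OF assms(1,2)] by blast
  have "X y = pt \<alpha> p \<beta> q y" using pq(6) assms(3) by blast
  thus ?thesis using pq unfolding pt_def by (cases "y = p"; cases "y = q") auto
qed

lemma rep:
  fixes X :: "nat \<Rightarrow> int"
  assumes "finite A" "(\<Sum>x\<in>A. (X x)^2) = (2::int)" "y \<in> A" "X y = c" "c \<noteq> 0"
  shows "\<exists>z b. z \<in> A \<and> z \<noteq> y \<and> \<bar>b\<bar> = 1 \<and> \<bar>c\<bar> = 1 \<and> (\<forall>x\<in>A. X x = pt c y b z x)"
proof -
  obtain p q \<alpha> \<beta> where pq: "p \<in> A" "q \<in> A" "p \<noteq> q" "\<bar>\<alpha>\<bar> = 1" "\<bar>\<beta>\<bar> = 1" "\<forall>x\<in>A. X x = pt \<alpha> p \<beta> q x"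
    using norm2[OF assms(1,2)] by blast
  have "X y = pt \<alpha> p \<beta> q y" using pq(6) assms(3) by blast
  hence yy: "(y = p \<and> c = \<alpha>) \<or> (y = q \<and> c = \<beta>)" using assms(4,5) pq(3) unfolding pt_def by (cases "y = p"; cases "y = q") auto
  thus ?thesis
  proof
    assume y: "y = p \<and> c = \<alpha>"
    show ?thesis using pq y by (intro exI[of _ q] exI[of _ \<beta>]) auto
  next
    assume y: "y = q \<and> c = \<beta>"
    show ?thesis using pq y pt_swap[OF pq(3)] by (intro exI[of _ p] exI[of _ \<alpha>]) auto
  qed
qed

lemma ip_rep:
  assumes "finite A" "p \<in> A" "q \<in> A" "p \<noteq> q" "\<forall>x\<in>A. X x = pt \<alpha> p \<beta> q x"
  shows "(\<Sum>x\<in>A. X x * Y x) = \<alpha> * Y p + \<beta> * Y q"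
proof -
  have "(\<Sum>x\<in>A. X x * Y x) = (\<Sum>x\<in>A. pt \<alpha> p \<beta> q x * Y x)"
    using assms(5) by (intro sum.cong) auto
  also have "\<dots> = \<alpha> * Y p + \<beta> * Y q" using sum_pt assms(1-4) by blast
  finally show ?thesis .
qed

lemma ip_comm: "(\<Sum>x\<in>A. X x * Y x) = (\<Sum>x\<in>A. Y x * (X x::int))"
  by (simp add: mult.commute)

lemma abs1_sq: "\<bar>(\<alpha>::int)\<bar> = 1 \<Longrightarrow> \<alpha> * \<alpha> = 1"
  by (metis abs_mult_self_eq mult.right_neutral)

lemma contra3:
  fixes X2 X3 X4 :: "nat \<Rightarrow> int"
  assumes A: "finite A" "p \<in> A" "q \<in> A" "p \<noteq> q"
    and n: "(\<Sum>x\<in>A. (X2 x)^2) = 2" "(\<Sum>x\<in>A. (X3 x)^2) = 2" "(\<Sum>x\<in>A. (X4 x)^2) = 2"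
    and v: "X3 p = \<alpha>" "X3 q = 0" "X4 p = \<alpha>" "X4 q = 0" "X2 p = 0" "X2 q = \<alpha>'" "\<alpha> \<noteq> 0" "\<alpha>' \<noteq> 0"
    and i: "(\<Sum>x\<in>A. X3 x * X4 x) = 1" "(\<Sum>x\<in>A. X3 x * X2 x) = 1" "(\<Sum>x\<in>A. X4 x * X2 x) = 1"
  shows False
proof -
  obtain z3 b3 where r3: "z3 \<in> A" "z3 \<noteq> p" "\<bar>b3\<bar> = 1" "\<bar>\<alpha>\<bar> = 1" "\<forall>x\<in>A. X3 x = pt \<alpha> p b3 z3 x"
    using rep[OF A(1) n(2) A(2) v(1) v(7)] by blast
  obtain z4 b4 where r4: "z4 \<in> A" "z4 \<noteq> p" "\<bar>b4\<bar> = 1" "\<forall>x\<in>A. X4 x = pt \<alpha> p b4 z4 x"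
    using rep[OF A(1) n(3) A(2) v(3) v(7)] by blast
  obtain z2 b2 where r2: "z2 \<in> A" "z2 \<noteq> q" "\<bar>b2\<bar> = 1" "\<forall>x\<in>A. X2 x = pt \<alpha>' q b2 z2 x"
    using rep[OF A(1) n(1) A(3) v(6) v(8)] by blast
  have X3z3: "X3 z3 = b3" using r3 pt_at[of p z3] by simp
  have X4z4: "X4 z4 = b4" using r4 pt_at[of p z4] by simp
  have X2z2: "X2 z2 = b2" using r2 pt_at[of q z2] by simp
  have a2: "\<alpha> * \<alpha> = 1" using abs1_sq r3(4) .
  have "\<alpha> * X4 p + b3 * X4 z3 = 1" using ip_rep[OF A(1,2) r3(1) r3(2)[symmetric] r3(5)] i(1) by simp
  hence "b3 * X4 z3 = 0" using v(3) a2 by simp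
  hence "X4 z3 = 0" using r3(3) by auto
  hence z34: "z3 \<noteq> z4" using X4z4 r4(3) by auto
  have "\<alpha> * X2 p + b3 * X2 z3 = 1" using ip_rep[OF A(1,2) r3(1) r3(2)[symmetric] r3(5)] i(2) by simp
  hence "X2 z3 \<noteq> 0" using v(5) by auto
  moreover have "X2 z3 = pt \<alpha>' q b2 z2 z3" using r2(4) r3(1) by blast
  ultimately have "z3 = q \<or> z3 = z2" by (auto simp: pt_def split: if_splits)
  moreover have "z3 \<noteq> q" using X3z3 v(2) r3(3) by auto
  ultimately have z32: "z3 = z2" by blast
  have "\<alpha> * X2 p + b4 * X2 z4 = 1" using ip_rep[OF A(1,2) r4(1) r4(2)[symmetric] r4(4)] i(3) by simp
  hence "X2 z4 \<noteq> 0" using v(5) by auto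
  moreover have "X2 z4 = pt \<alpha>' q b2 z2 z4" using r2(4) r4(1) by blast
  ultimately have "z4 = q \<or> z4 = z2" by (auto simp: pt_def split: if_splits)
  moreover have "z4 \<noteq> q" using X4z4 v(4) r4(3) by auto
  ultimately have "z4 = z2" by blast
  thus False using z32 z34 by simp
qed

lemma star:
  fixes u :: "nat \<Rightarrow> nat \<Rightarrow> int"
  assumes A: "finite A" "p \<in> A" "\<alpha> \<noteq> 0" "J \<noteq> {}"
    and up: "\<forall>j\<in>J. u j p = \<alpha>"
    and n: "\<forall>j\<in>J. (\<Sum>x\<in>A. (u j x)^2) = 2"
    and i: "\<forall>j\<in>J. \<forall>k\<in>J. j \<noteq> k \<longrightarrow> (\<Sum>x\<in>A. u j x * u k x) = 1"
  shows "\<exists>h \<beta>. \<bar>\<alpha>\<bar> = 1 \<and> inj_on h J \<and> (\<forall>j\<in>J. h j \<in> A \<and> h j \<noteq> p \<and> \<bar>\<beta> j\<bar> = 1 \<and> (\<forall>x\<in>A. u j x = pt \<alpha> p (\<beta> j) (h j) x))"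
proof -
  have "\<forall>j\<in>J. \<exists>z b. z \<in> A \<and> z \<noteq> p \<and> \<bar>b\<bar> = 1 \<and> \<bar>\<alpha>\<bar> = 1 \<and> (\<forall>x\<in>A. u j x = pt \<alpha> p b z x)"
  proof
    fix j assume "j \<in> J"
    thus "\<exists>z b. z \<in> A \<and> z \<noteq> p \<and> \<bar>b\<bar> = 1 \<and> \<bar>\<alpha>\<bar> = 1 \<and> (\<forall>x\<in>A. u j x = pt \<alpha> p b z x)"
      using rep[OF A(1) _ A(2) _ A(3), of "u j"] n up by blast
  qed
  then obtain h \<beta> where hb: "\<forall>j\<in>J. h j \<in> A \<and> h j \<noteq> p \<and> \<bar>\<beta> j\<bar> = 1 \<and> \<bar>\<alpha>\<bar> = 1 \<and> (\<forall>x\<in>A. u j x = pt \<alpha> p (\<beta> j) (h j) x)"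
    by metis
  have a1: "\<bar>\<alpha>\<bar> = 1" using hb A(4) by blast
  have "inj_on h J"
  proof (rule inj_onI, rule ccontr)
    fix j k assume jk: "j \<in> J" "k \<in> J" "h j = h k" "j \<noteq> k"
    have hj: "h j \<in> A" "h j \<noteq> p" "\<bar>\<beta> j\<bar> = 1" "\<forall>x\<in>A. u j x = pt \<alpha> p (\<beta> j) (h j) x" using hb jk(1) by auto
    have hk: "h k \<in> A" "h k \<noteq> p" "\<bar>\<beta> k\<bar> = 1" "\<forall>x\<in>A. u k x = pt \<alpha> p (\<beta> k) (h k) x" using hb jk(2) by auto
    have "(\<Sum>x\<in>A. u j x * u k x) = \<alpha> * u k p + \<beta> j * u k (h j)"
      by (rule ip_rep[OF A(1,2) hj(1) hj(2)[symmetric] hj(4)])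
    hence "\<alpha> * u k p + \<beta> j * u k (h j) = 1" using i jk by simp
    moreover have "u k (h j) = \<beta> k" using hk jk(3) pt_at[of p "h k"] by simp
    moreover have "u k p = \<alpha>" using up jk by blast
    ultimately have "\<beta> j * \<beta> k = 0" using abs1_sq[OF a1] by simp
    thus False using hj(3) hk(3) by auto
  qed
  thus ?thesis using hb a1 by blast
qed

lemma pivot:
  fixes u :: "nat \<Rightarrow> nat \<Rightarrow> int"
  assumes A: "finite A" "finite J" "card J \<ge> 4"
    and n: "\<forall>j\<in>J. (\<Sum>x\<in>A. (u j x)^2) = 2"
    and i: "\<forall>j\<in>J. \<forall>k\<in>J. j \<noteq> k \<longrightarrow> (\<Sum>x\<in>A. u j x * u k x) = 1"
  shows "\<exists>p \<alpha> h \<beta>. p \<in> A \<and> \<bar>\<alpha>\<bar> = 1 \<and> inj_on h J \<and> (\<forall>j\<in>J. h j \<in> A \<and> h j \<noteq> p \<and> \<bar>\<beta> j\<bar> = 1 \<and> (\<forall>x\<in>A. u j x = pt \<alpha> p (\<beta> j) (h j) x))"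
proof -
  have Jne: "J \<noteq> {}" using A by auto
  then obtain j1 where j1: "j1 \<in> J" by blast
  obtain p q \<alpha> \<alpha>' where pq: "p \<in> A" "q \<in> A" "p \<noteq> q" "\<bar>\<alpha>\<bar> = 1" "\<bar>\<alpha>'\<bar> = 1" "\<forall>x\<in>A. u j1 x = pt \<alpha> p \<alpha>' q x"
    using norm2[OF A(1), of "u j1"] n j1 by blast
  have u1p: "u j1 p = \<alpha>" and u1q: "u j1 q = \<alpha>'" using pq pt_at[OF pq(3)] by auto
  have types: "(u j p = \<alpha> \<and> u j q = 0) \<or> (u j p = 0 \<and> u j q = \<alpha>')" if j: "j \<in> J" "j \<noteq> j1" for j
  proof -
    have "\<alpha> * u j p + \<alpha>' * u j q = 1" using ip_rep[OF A(1) pq(1,2,3,6)] i j j1 by auto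
    moreover have "\<bar>u j p\<bar> \<le> 1" "\<bar>u j q\<bar> \<le> 1" using norm2_le1[OF A(1)] n j pq by auto
    ultimately show ?thesis using pq(4,5) by (auto simp: abs_if split: if_splits)
  qed
  have "(\<forall>j\<in>J. u j p = \<alpha>) \<or> (\<forall>j\<in>J. u j q = \<alpha>')"
  proof (rule ccontr)
    assume "\<not> ?thesis"
    then obtain j2 j3 where j23: "j2 \<in> J" "u j2 p \<noteq> \<alpha>" "j3 \<in> J" "u j3 q \<noteq> \<alpha>'" by blast
    have j2: "j2 \<noteq> j1" "u j2 p = 0" "u j2 q = \<alpha>'" using j23 types u1p by auto
    have j3: "j3 \<noteq> j1" "u j3 p = \<alpha>" "u j3 q = 0" using j23 types u1q by auto
    have "j2 \<noteq> j3" using j2 j3 pq(4) by auto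
    have "card {j1, j2, j3} \<le> 3" by (rule card_insert_le_m1) (auto simp: card_insert_le_m1 card_le_Suc0_iff_eq)
    hence "\<not> J \<subseteq> {j1, j2, j3}" using A(3) card_mono[of "{j1,j2,j3}" J] by auto
    then obtain j4 where j4: "j4 \<in> J" "j4 \<noteq> j1" "j4 \<noteq> j2" "j4 \<noteq> j3" by blast
    have a0: "\<alpha> \<noteq> 0" "\<alpha>' \<noteq> 0" using pq by auto
    from types[OF j4(1,2)] show False
    proof
      assume t: "u j4 p = \<alpha> \<and> u j4 q = 0"
      show False
        using contra3[OF A(1) pq(1,2,3), of "u j2" "u j3" "u j4" \<alpha> \<alpha>'] n i j2 j3 t a0 j23(1,3) j4 \<open>j2 \<noteq> j3\<close>
        by auto
    next
      assume t: "u j4 p = 0 \<and> u j4 q = \<alpha>'"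
      show False
        using contra3[OF A(1) pq(2,1) pq(3)[symmetric], of "u j3" "u j2" "u j4" \<alpha>' \<alpha>] n i j2 j3 t a0 j23(1,3) j4 \<open>j2 \<noteq> j3\<close>
        by auto
    qed
  qed
  thus ?thesis
  proof
    assume "\<forall>j\<in>J. u j p = \<alpha>"
    thus ?thesis using star[OF A(1) pq(1) _ Jne _ n i] pq(1,4) by force
  next
    assume "\<forall>j\<in>J. u j q = \<alpha>'"
    thus ?thesis using star[OF A(1) pq(2) _ Jne _ n i] pq(2,5) by force
  qed
qed

lemma decomp:
  fixes f :: "nat \<Rightarrow> int"
  assumes "finite A" "p \<in> A" "inj_on h J" "\<forall>j\<in>J. h j \<in> A \<and> h j \<noteq> p"
  shows "(\<Sum>x\<in>A. f x) = f p + (\<Sum>j\<in>J. f (h j)) + (\<Sum>x\<in>A - ({p} \<union> h`J). f x)"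
proof -
  have B: "{p} \<union> h`J \<subseteq> A" using assms by auto
  have finJ: "finite J" using finite_imageD[OF finite_subset[OF _ assms(1)] assms(3)] B by blast
  have pn: "p \<notin> h`J" using assms(4) by auto
  have "(\<Sum>x\<in>A. f x) = (\<Sum>x\<in>A - ({p} \<union> h`J). f x) + (\<Sum>x\<in>{p} \<union> h`J. f x)"
    using sum.subset_diff[OF B assms(1)] by simp
  also have "(\<Sum>x\<in>{p} \<union> h`J. f x) = f p + (\<Sum>x\<in>h`J. f x)"
    using pn finJ by simp
  also have "(\<Sum>x\<in>h`J. f x) = (\<Sum>j\<in>J. f (h j))" using sum.reindex[OF assms(3)] by simp
  finally show ?thesis by simp
qed

lemma stab:
  fixes z :: "nat \<Rightarrow> int" and u :: "nat \<Rightarrow> nat \<Rightarrow> int"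
  assumes A: "finite A" "p \<in> A" "\<bar>\<alpha>\<bar> = 1" "inj_on h J" "finite J"
    and hb: "\<forall>j\<in>J. h j \<in> A \<and> h j \<noteq> p \<and> \<bar>\<beta> j\<bar> = 1 \<and> (\<forall>x\<in>A. u j x = pt \<alpha> p (\<beta> j) (h j) x)"
    and T: "T \<subseteq> J" "int (card T) = \<rho>" "int (card J) \<ge> 2 * \<rho> + 1"
    and nz: "(\<Sum>x\<in>A. (z x)^2) = \<rho> + 1"
    and iz: "\<forall>j\<in>J. (\<Sum>x\<in>A. z x * u j x) = (if j \<in> T then -1 else 0)"
  shows "\<exists>g \<gamma>. g \<in> A \<and> g \<noteq> p \<and> g \<notin> h`J \<and> \<bar>\<gamma>\<bar> = 1 \<and>
           (\<forall>Y. (\<Sum>x\<in>A. z x * Y x) = \<gamma> * Y g - (\<Sum>j\<in>T. \<beta> j * Y (h j)))"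
proof -
  define c0 where "c0 = \<alpha> * z p"
  have hb': "\<forall>j\<in>J. h j \<in> A \<and> h j \<noteq> p" using hb by blast
  have a2: "\<alpha> * \<alpha> = 1" using abs1_sq[OF A(3)] .
  have zh: "z (h j) = - \<beta> j * ((if j \<in> T then 1 else 0) + c0)" if j: "j \<in> J" for j
  proof -
    have hj: "h j \<in> A" "h j \<noteq> p" "\<bar>\<beta> j\<bar> = 1" "\<forall>x\<in>A. u j x = pt \<alpha> p (\<beta> j) (h j) x" using hb j by auto
    have "(\<Sum>x\<in>A. u j x * z x) = \<alpha> * z p + \<beta> j * z (h j)"
      by (rule ip_rep[OF A(1,2) hj(1) hj(2)[symmetric] hj(4)])
    hence e: "\<alpha> * z p + \<beta> j * z (h j) = (if j \<in> T then -1 else 0)" using iz j by (simp add: mult.commute)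
    have b2: "\<beta> j * \<beta> j = 1" using abs1_sq[OF hj(3)] .
    have "\<beta> j * (\<alpha> * z p + \<beta> j * z (h j)) = \<beta> j * (if j \<in> T then -1 else 0)" using e by simp
    moreover have "\<beta> j * (\<beta> j * z (h j)) = z (h j)" using b2 by (simp add: mult.assoc[symmetric])
    ultimately have "\<beta> j * c0 + z (h j) = \<beta> j * (if j \<in> T then -1 else 0)" unfolding c0_def
      by (simp add: distrib_left mult.left_commute)
    thus ?thesis by (cases "j \<in> T") (simp_all add: algebra_simps)
  qed
  have zh2: "(z (h j))^2 = ((if j \<in> T then 1 else 0) + c0)^2" if j: "j \<in> J" for j
  proof -
    have b2: "\<beta> j * \<beta> j = 1" using abs1_sq hb j by blast
    have "(z (h j))^2 = (- \<beta> j)^2 * ((if j \<in> T then 1 else 0) + c0)^2"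
      unfolding zh[OF j] by (rule power_mult_distrib)
    moreover have "(- \<beta> j)^2 = 1" using b2 by (simp add: power2_eq_square)
    ultimately show ?thesis by simp
  qed
  have zp2: "(z p)^2 = c0^2" unfolding c0_def using a2 by (simp add: power2_eq_square algebra_simps)
  define R where "R = A - ({p} \<union> h`J)"
  have dec: "(\<Sum>x\<in>A. (z x)^2) = (z p)^2 + (\<Sum>j\<in>J. (z (h j))^2) + (\<Sum>x\<in>R. (z x)^2)"
    unfolding R_def by (rule decomp[OF A(1,2,4) hb'])
  have Rnn: "(\<Sum>x\<in>R. (z x)^2) \<ge> 0" by (simp add: sum_nonneg)
  have c00: "c0 = 0"
  proof (rule ccontr)
    assume c: "c0 \<noteq> 0"
    have c1: "c0^2 \<ge> 1" using sq_ge1[OF c] .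
    have "(\<Sum>j\<in>J. (z (h j))^2) \<ge> (\<Sum>j\<in>J-T. (z (h j))^2)"
      by (rule sum_mono2) (use A(5) in auto)
    also have "(\<Sum>j\<in>J-T. (z (h j))^2) = (\<Sum>j\<in>J-T. c0^2)" using zh2 by (intro sum.cong) auto
    also have "\<dots> = int (card (J - T)) * c0^2" by simp
    also have "int (card (J - T)) = int (card J) - \<rho>" using T A(5) card_Diff_subset[of T J] finite_subset[of T J]
      by (simp add: of_nat_diff card_mono)
    finally have "(\<Sum>j\<in>J. (z (h j))^2) \<ge> (int (card J) - \<rho>) * c0^2" .
    moreover have "(int (card J) - \<rho>) * c0^2 \<ge> (\<rho> + 1) * 1" using T(3) c1
      by (intro mult_mono) auto
    hence "(int (card J) - \<rho>) * c0^2 \<ge> \<rho> + 1" by simp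
    ultimately show False using dec nz Rnn zp2 c1 by linarith
  qed
  have zp0: "z p = 0" using c00 A(3) unfolding c0_def by auto
  have "(\<Sum>j\<in>J. (z (h j))^2) = (\<Sum>j\<in>J. if j \<in> T then 1 else 0)" using zh2 c00 by (intro sum.cong) auto
  also have "\<dots> = int (card T)" using T(1) A(5) by (simp add: sum.If_cases Int_absorb1)
  finally have sJ: "(\<Sum>j\<in>J. (z (h j))^2) = \<rho>" using T(2) by simp
  have "(\<Sum>x\<in>R. (z x)^2) = 1" using dec nz sJ zp0 by simp
  then obtain g where g: "g \<in> R" "\<bar>z g\<bar> = 1" "\<forall>x\<in>R. x \<noteq> g \<longrightarrow> z x = 0"
    using norm1[of R z] A(1) unfolding R_def by auto
  have res: "(\<Sum>x\<in>A. z x * Y x) = z g * Y g - (\<Sum>j\<in>T. \<beta> j * Y (h j))" for Y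
  proof -
    have "(\<Sum>x\<in>A. z x * Y x) = z p * Y p + (\<Sum>j\<in>J. z (h j) * Y (h j)) + (\<Sum>x\<in>R. z x * Y x)"
      unfolding R_def by (rule decomp[OF A(1,2,4) hb'])
    also have "(\<Sum>j\<in>J. z (h j) * Y (h j)) = (\<Sum>j\<in>J. if j \<in> T then - (\<beta> j * Y (h j)) else 0)"
      using zh c00 by (intro sum.cong) auto
    also have "\<dots> = - (\<Sum>j\<in>T. \<beta> j * Y (h j))" using T(1) A(5)
      by (simp add: sum.If_cases Int_absorb1 sum_negf)
    also have "(\<Sum>x\<in>R. z x * Y x) = z g * Y g"
    proof -
      have fR: "finite R" using A(1) unfolding R_def by auto
      have "(\<Sum>x\<in>R. z x * Y x) = z g * Y g + (\<Sum>x\<in>R-{g}. z x * Y x)" using fR g(1) by (simp add: sum.remove)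
      also have "(\<Sum>x\<in>R-{g}. z x * Y x) = 0" using g(3) by (intro sum.neutral) auto
      finally show ?thesis by simp
    qed
    finally show ?thesis using zp0 by simp
  qed
  show ?thesis using g res unfolding R_def by (intro exI[of _ g] exI[of _ "z g"]) auto
qed



lemma ip_sym: "ip N u v = ip N v u"
  unfolding ip_def by (simp add: mult.commute)

lemma ip_sum_right:
  assumes "finite C"
  shows "ip N u (\<lambda>x. \<Sum>c\<in>C. k c * f c x) = (\<Sum>c\<in>C. k c * ip N u (f c))"
  unfolding ip_def
  by (simp add: sum_distrib_left sum_distrib_right mult.assoc mult.left_commute sum.swap[of _ C])

lemma ip_add_right: "ip N u (\<lambda>x. f x + g x) = ip N u f + ip N u g"
  unfolding ip_def by (simp add: distrib_left sum.distrib)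

lemma ip_expand:
  assumes "orthonormal_basis N e" "v \<in> ZN N"
  shows "ip N u v = (\<Sum>c=1..N. ip N u (e c) * ip N v (e c))"
proof -
  have "v = (\<lambda>x. \<Sum>c=1..N. ip N v (e c) * e c x)" using assms unfolding orthonormal_basis_def by blast
  hence "ip N u v = ip N u (\<lambda>x. \<Sum>c=1..N. ip N v (e c) * e c x)" by simp
  also have "\<dots> = (\<Sum>c=1..N. ip N v (e c) * ip N u (e c))" by (rule ip_sum_right) simp
  finally show ?thesis by (simp add: mult.commute)
qed

lemma onb_ip: "orthonormal_basis N e \<Longrightarrow> i \<in> {1..N} \<Longrightarrow> j \<in> {1..N} \<Longrightarrow> ip N (e i) (e j) = (if i = j then 1 else 0)"
  unfolding orthonormal_basis_def by blast

lemma onb_ZN: "orthonormal_basis N e \<Longrightarrow> i \<in> {1..N} \<Longrightarrow> e i \<in> ZN N"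
  unfolding orthonormal_basis_def by blast

definition mkv :: "nat \<Rightarrow> (nat \<Rightarrow> nat \<Rightarrow> int) \<Rightarrow> (nat \<Rightarrow> int) \<Rightarrow> (nat \<Rightarrow> int)" where
  "mkv N e \<kappa> = (\<lambda>x. \<Sum>c\<in>{1..N}. \<kappa> c * e c x)"

lemma mkv_ZN: "orthonormal_basis N e \<Longrightarrow> mkv N e \<kappa> \<in> ZN N"
  unfolding mkv_def ZN_def using onb_ZN[of N e] unfolding ZN_def by auto

lemma ip_mkv: "ip N u (mkv N e \<kappa>) = (\<Sum>c\<in>{1..N}. \<kappa> c * ip N u (e c))"
  unfolding mkv_def by (rule ip_sum_right) simp

lemma ip_mkv_mkv:
  assumes "orthonormal_basis N e"
  shows "ip N (mkv N e \<kappa>) (mkv N e \<kappa>') = (\<Sum>c\<in>{1..N}. \<kappa> c * \<kappa>' c)"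
proof -
  have "ip N (mkv N e \<kappa>) (e c) = \<kappa> c" if c: "c \<in> {1..N}" for c
  proof -
    have "ip N (mkv N e \<kappa>) (e c) = ip N (e c) (mkv N e \<kappa>)" by (rule ip_sym)
    also have "\<dots> = (\<Sum>d\<in>{1..N}. \<kappa> d * ip N (e c) (e d))" by (rule ip_mkv)
    also have "\<dots> = (\<Sum>d\<in>{1..N}. if d = c then \<kappa> c else 0)"
      using onb_ip[OF assms c] by (intro sum.cong) auto
    finally show ?thesis using c by simp
  qed
  thus ?thesis by (simp add: ip_mkv mult.commute)
qed

definition wv :: "int list \<Rightarrow> nat \<Rightarrow> nat \<Rightarrow> int" where
  "wv \<sigma> l c = (if 1 \<le> c \<and> c \<le> length \<sigma> then \<sigma> ! (c - 1) else if c = length \<sigma> + 1 \<and> l > 0 then 1 else 0)"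

lemma abs1_sqr: "\<bar>x::int\<bar> \<le> 1 \<Longrightarrow> x \<noteq> 0 \<Longrightarrow> x * x = 1"
proof -
  assume "\<bar>x\<bar> \<le> 1" "x \<noteq> 0"
  hence "x = 1 \<or> x = -1" by linarith
  thus ?thesis by auto
qed

lemma hjcf_gt1: "xs \<noteq> [] \<Longrightarrow> (\<forall>x\<in>set xs. x \<ge> 2) \<Longrightarrow> hjcf xs > 1"
proof (induction xs rule: hjcf.induct)
  case 1 thus ?case by simp
next
  case (2 x) thus ?case by simp
next
  case (3 x y ys)
  have h: "hjcf (y # ys) > 1" using 3 by simp
  hence "1 / hjcf (y # ys) < 1" by simp
  moreover have "of_int x \<ge> (2::rat)" using 3(3) by simp
  ultimately show ?case by simp
qed

lemma sumsq_len:
  assumes "\<forall>x\<in>set xs. (x::int) \<ge> 1" "sum_list (map (\<lambda>x. x^2) xs) = int (length xs)"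
  shows "xs = replicate (length xs) 1"
  using assms
proof (induction xs)
  case Nil thus ?case by simp
next
  case (Cons x xs)
  have ge: "sum_list (map (\<lambda>x. x^2) xs) \<ge> int (length xs)"
  proof -
    have "sum_list (map (\<lambda>x. x^2) xs) \<ge> sum_list (map (\<lambda>x. 1) xs)"
      by (rule sum_list_mono) (use Cons(2) sq_ge1 in force)
    thus ?thesis by (simp add: sum_list_triv)
  qed
  have x1: "x \<ge> 1" using Cons(2) by simp
  hence "x^2 \<ge> 1" using sq_ge1 by force
  have "x^2 + sum_list (map (\<lambda>x. x^2) xs) = 1 + int (length xs)" using Cons(3) by simp
  hence "x^2 = 1" "sum_list (map (\<lambda>x. x^2) xs) = int (length xs)" using ge \<open>x^2 \<ge> 1\<close> by linarith+
  hence "x = 1" using x1 by (simp add: power2_eq_1_iff)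
  moreover have "xs = replicate (length xs) 1" using Cons by (simp add: \<open>sum_list (map (\<lambda>x. x^2) xs) = int (length xs)\<close>)
  ultimately show ?case by simp
qed

lemma sorted_le_last: "sorted xs \<Longrightarrow> x \<in> set xs \<Longrightarrow> x \<le> last xs"
proof (induction xs)
  case Nil thus ?case by simp
next
  case (Cons y ys)
  show ?case
  proof (cases "ys = []")
    case True thus ?thesis using Cons by simp
  next
    case False
    have "last ys \<in> set ys" using False by simp
    hence "y \<le> last ys" using Cons(2) by simp
    thus ?thesis using Cons False by auto
  qed
qed

locale cm =
  fixes N :: nat and r :: rat and a :: "int list" and w e :: "nat \<Rightarrow> nat \<Rightarrow> int" and \<sigma> :: "int list"
  assumes cmd: "cm_data N r a w e \<sigma>"
begin

abbreviation "l \<equiv> length a - 1"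
abbreviation "t \<equiv> length \<sigma>"
abbreviation "W c \<equiv> ip N (w 0) (e c)"

lemmas cmdu = cmd[unfolded cm_data_def Let_def]
lemmas F = cmdu[THEN conjunct1] cmdu[THEN conjunct2, THEN conjunct1] cmdu[THEN conjunct2, THEN conjunct2, THEN conjunct1] cmdu[THEN conjunct2, THEN conjunct2, THEN conjunct2, THEN conjunct1] cmdu[THEN conjunct2, THEN conjunct2, THEN conjunct2, THEN conjunct2, THEN conjunct1] cmdu[THEN conjunct2, THEN conjunct2, THEN conjunct2, THEN conjunct2, THEN conjunct2, THEN conjunct1] cmdu[THEN conjunct2, THEN conjunct2, THEN conjunct2, THEN conjunct2, THEN conjunct2, THEN conjunct2, THEN conjunct1] cmdu[THEN conjunct2, THEN conjunct2, THEN conjunct2, THEN conjunct2, THEN conjunct2, THEN conjunct2, THEN conjunct2, THEN conjunct1] cmdu[THEN conjunct2, THEN conjunct2, THEN conjunct2, THEN conjunct2, THEN conjunct2, THEN conjunct2, THEN conjunct2, THEN conjunct2, THEN conjunct1] cmdu[THEN conjunct2, THEN conjunct2, THEN conjunct2, THEN conjunct2, THEN conjunct2, THEN conjunct2, THEN conjunct2, THEN conjunct2, THEN conjunct2, THEN conjunct1] cmdu[THEN conjunct2, THEN conjunct2, THEN conjunct2, THEN conjunct2, THEN conjunct2, THEN conjunct2, THEN conjunct2, THEN conjunct2, THEN conjunct2, THEN conjunct2, THEN conjunct1] cmdu[THEN conjunct2, THEN conjunct2, THEN conjunct2, THEN conjunct2, THEN conjunct2, THEN conjunct2, THEN conjunct2,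 THEN conjunct2, THEN conjunct2, THEN conjunct2, THEN conjunct2, THEN conjunct1] cmdu[THEN conjunct2, THEN conjunct2, THEN conjunct2, THEN conjunct2, THEN conjunct2, THEN conjunct2, THEN conjunct2, THEN conjunct2, THEN conjunct2, THEN conjunct2, THEN conjunct2, THEN conjunct2, THEN conjunct1] cmdu[THEN conjunct2, THEN conjunct2, THEN conjunct2, THEN conjunct2, THEN conjunct2, THEN conjunct2, THEN conjunct2, THEN conjunct2, THEN conjunct2, THEN conjunct2, THEN conjunct2, THEN conjunct2, THEN conjunct2, THEN conjunct1] cmdu[THEN conjunct2, THEN conjunct2, THEN conjunct2, THEN conjunct2, THEN conjunct2, THEN conjunct2, THEN conjunct2, THEN conjunct2, THEN conjunct2, THEN conjunct2, THEN conjunct2, THEN conjunct2, THEN conjunct2, THEN conjunct2, THEN conjunct1] cmdu[THEN conjunct2, THEN conjunct2, THEN conjunct2, THEN conjunct2, THEN conjunct2, THEN conjunct2, THEN conjunct2, THEN conjunct2, THEN conjunct2, THEN conjunct2, THEN conjunct2, THEN conjunct2, THEN conjunct2, THEN conjunct2, THEN conjunct2, THEN conjunct1] cmdu[THEN conjunct2, THEN conjunct2, THEN conjunct2, THEN conjunct2, THEN conjunct2, THEN conjunct2, THEN conjunct2, THEN conjunct2, THEN conjunct2, THEN conjunct2, THEN conjunct2, THEN conjunct2, THEN conjunct2, THEN conjunct2, THEN conjunct2, THEN conjunct2]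

lemma onb: "orthonormal_basis N e" using F by blast

lemma W_eq: assumes c: "c \<in> {1..N}" shows "W c = wv \<sigma> l c"
proof -
  have ei: "ip N (e c) (e (i + 1)) = (if c = i + 1 then 1 else 0)" if "i < t" "t \<le> N" for i
    using onb_ip[OF onb c, of "i+1"] that by auto
  have S: "t \<le> N \<Longrightarrow> (\<Sum>i<t. \<sigma> ! i * ip N (e c) (e (i + 1))) = (if 1 \<le> c \<and> c \<le> t then \<sigma> ! (c - 1) else 0)"
  proof -
    assume tN: "t \<le> N"
    have "(\<Sum>i<t. \<sigma> ! i * ip N (e c) (e (i + 1))) = (\<Sum>i<t. if i = c - 1 \<and> 1 \<le> c then \<sigma> ! (c - 1) else 0)"
      using ei[OF _ tN] c by (intro sum.cong) auto
    also have "\<dots> = (if 1 \<le> c \<and> c \<le> t then \<sigma> ! (c - 1) else 0)"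
      using c by (auto simp: sum.delta')
    finally show ?thesis .
  qed
  show ?thesis
  proof (cases "l = 0")
    case True
    hence w0: "w 0 = (\<lambda>c. \<Sum>i<t. \<sigma> ! i * e (i + 1) c)" and tN: "t \<le> N" using F(14) by auto
    have "W c = ip N (e c) (w 0)" by (rule ip_sym)
    also have "\<dots> = (\<Sum>i<t. \<sigma> ! i * ip N (e c) (e (i + 1)))" unfolding w0 by (rule ip_sum_right) simp
    finally show ?thesis using S[OF tN] True unfolding wv_def by simp
  next
    case False
    hence w0: "w 0 = (\<lambda>c. e (t + 1) c + (\<Sum>i<t. \<sigma> ! i * e (i + 1) c))" and tN: "t + 1 \<le> N" using F(14) by auto
    have "W c = ip N (e c) (w 0)" by (rule ip_sym)
    also have "\<dots> = ip N (e c) (e (t + 1)) + (\<Sum>i<t. \<sigma> ! i * ip N (e c) (e (i + 1)))"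
      unfolding w0 ip_add_right by (subst ip_sum_right) simp_all
    also have "ip N (e c) (e (t + 1)) = (if c = t + 1 then 1 else 0)" using onb_ip[OF onb c, of "t+1"] tN by auto
    finally show ?thesis using S tN False c unfolding wv_def by auto
  qed
qed

lemma tN: "t \<le> N" "l > 0 \<Longrightarrow> t + 1 \<le> N" using F(14) by (auto split: if_splits)

lemma W_nonneg: "c \<in> {1..N} \<Longrightarrow> W c \<ge> 0"
  using W_eq F(12) by (auto simp: wv_def less_imp_le)

lemma W_pos: "c \<in> {1..t} \<Longrightarrow> W c \<ge> 1"
proof -
  assume c: "c \<in> {1..t}"
  hence "c \<in> {1..N}" using tN by auto
  hence "W c = \<sigma> ! (c - 1)" using W_eq c by (simp add: wv_def)
  moreover have "\<sigma> ! (c - 1) \<in> set \<sigma>" using c by auto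
  ultimately show ?thesis using F(12) by force
qed

definition supp :: "nat set" where "supp = {c\<in>{1..N}. W c \<noteq> 0}"

lemma supp_eq: "supp = {1..t} \<union> (if l > 0 then {t+1} else {})"
proof
  show "supp \<subseteq> {1..t} \<union> (if l > 0 then {t+1} else {})"
    unfolding supp_def using W_eq by (auto simp: wv_def split: if_splits)
  show "{1..t} \<union> (if l > 0 then {t+1} else {}) \<subseteq> supp"
  proof
    fix c assume c: "c \<in> {1..t} \<union> (if l > 0 then {t+1} else {})"
    show "c \<in> supp"
    proof (cases "c \<in> {1..t}")
      case True thus ?thesis using W_pos[OF True] tN unfolding supp_def by auto
    next
      case False
      hence "l > 0" "c = t + 1" using c by (auto split: if_splits)
      thus ?thesis using tN W_eq[of c] unfolding supp_def by (auto simp: wv_def)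
    qed
  qed
qed

lemma MW: "image_mset W (mset_set supp) = mset \<sigma> + (if l > 0 then {#1#} else {#})"
proof -
  have m1: "image_mset W (mset_set {1..t}) = mset \<sigma>"
  proof -
    have st: "{1..t} = Suc ` {0..<t}" by (simp add: image_Suc_atLeastLessThan atLeastLessThanSuc_atLeastAtMost)
    have e1: "image_mset W (mset_set {1..t}) = image_mset (\<lambda>c. \<sigma> ! (c - 1)) (mset_set {1..t})"
      using W_eq tN by (intro image_mset_cong) (auto simp: wv_def)
    have e2: "mset_set {1..t} = image_mset Suc (mset_set {0..<t})"
      unfolding st by (rule image_mset_mset_set[symmetric]) simp
    have "image_mset (\<lambda>c. \<sigma> ! (c - 1)) (image_mset Suc (mset_set {0..<t})) = image_mset (nth \<sigma>) (mset [0..<t])"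
      by (simp add: image_mset.compositionality o_def)
    also have "\<dots> = mset \<sigma>" by (metis map_nth mset_map)
    finally show ?thesis using e1 e2 by simp
  qed
  show ?thesis
  proof (cases "l > 0")
    case False thus ?thesis using m1 supp_eq by simp
  next
    case True
    have "mset_set supp = mset_set {1..t} + mset_set {t+1}" using True supp_eq by (simp add: mset_set_Union)
    moreover have "W (t+1) = 1" using W_eq[of "t+1"] tN True by (simp add: wv_def)
    ultimately show ?thesis using m1 True by simp
  qed
qed

lemma a0_eq: "a ! 0 = (\<Sum>c\<in>{1..N}. (W c)^2)"
proof -
  have "a ! 0 = ip N (w 0) (w 0)" using F(7) by simp
  also have "\<dots> = (\<Sum>c=1..N. W c * W c)" by (rule ip_expand[OF onb]) (use F(6) in simp)
  finally show ?thesis by (simp add: power2_eq_square)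
qed

lemma sum_supp: "(\<Sum>c\<in>{1..N}. f (W c)) = (\<Sum>c\<in>supp. f (W c))" if "f 0 = (0::int)" for f
  unfolding supp_def using that by (intro sum.mono_neutral_right) auto

lemma a0_list: "a ! 0 = sum_list (map (\<lambda>x. x^2) \<sigma>) + (if l > 0 then 1 else 0)"
proof -
  have "a ! 0 = (\<Sum>c\<in>supp. (W c)^2)" using a0_eq sum_supp[of "\<lambda>x. x^2"] by simp
  also have "\<dots> = sum_mset (image_mset (\<lambda>x. x^2) (image_mset W (mset_set supp)))"
    by (simp add: sum_unfold_sum_mset image_mset.compositionality o_def)
  also have "\<dots> = sum_list (map (\<lambda>x. x^2) \<sigma>) + (if l > 0 then 1 else 0)"
    unfolding MW by (simp flip: sum_mset_sum_list)
  finally show ?thesis .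
qed

lemma r_le: "r \<le> of_int (a ! 0)" "l > 0 \<Longrightarrow> r < of_int (a ! 0)"
proof -
  obtain a0 rest where ar: "a = a0 # rest" using F(2) by (cases a) auto
  have r: "r = hjcf a" using F(3) by simp
  show "l > 0 \<Longrightarrow> r < of_int (a ! 0)"
  proof -
    assume l: "l > 0"
    then obtain a1 rest' where rr: "rest = a1 # rest'" using ar by (cases rest) auto
    have "\<forall>x\<in>set rest. x \<ge> 2"
    proof
      fix x assume "x \<in> set rest"
      then obtain i where i: "i < length rest" "rest ! i = x" by (auto simp: in_set_conv_nth)
      hence "Suc i \<in> {1..l}" using ar by auto
      hence "a ! Suc i \<ge> 2" using F(5) by blast
      thus "x \<ge> 2" using ar i by simp
    qed
    hence "hjcf rest > 1" using hjcf_gt1 rr by blast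
    hence "1 / hjcf rest > 0" by simp
    thus ?thesis using r ar rr by simp
  qed
  show "r \<le> of_int (a ! 0)"
  proof (cases "l > 0")
    case True thus ?thesis using \<open>l > 0 \<Longrightarrow> r < of_int (a ! 0)\<close> by simp
  next
    case False hence "rest = []" using ar by simp
    thus ?thesis using r ar by simp
  qed
qed

definition I :: "nat \<Rightarrow> nat set" where "I k = {c\<in>{1..N}. ip N (w k) (e c) \<noteq> 0}"

lemma I_fin: "finite (I k)" unfolding I_def by simp
lemma I_sub: "I k \<subseteq> {1..N}" unfolding I_def by auto

lemma III': "j < k \<Longrightarrow> k \<le> l \<Longrightarrow> ip N (w j) (w k) = - int (card (I j \<inter> I k))"
proof -
  assume "j < k" "k \<le> l"
  hence "ip N (w j) (w k) = - int (card {c\<in>{1..N}. ip N (w j) (e c) \<noteq> 0 \<and> ip N (w k) (e c) \<noteq> 0})"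
    using F(16) by blast
  moreover have "{c\<in>{1..N}. ip N (w j) (e c) \<noteq> 0 \<and> ip N (w k) (e c) \<noteq> 0} = I j \<inter> I k"
    unfolding I_def by auto
  ultimately show ?thesis by simp
qed

lemma inter_far: "j + 1 < k \<Longrightarrow> k \<le> l \<Longrightarrow> I j \<inter> I k = {}"
proof -
  assume a: "j + 1 < k" "k \<le> l"
  hence "ip N (w j) (w k) = 0" using F(9) by auto
  hence "card (I j \<inter> I k) = 0" using III'[of j k] a by simp
  thus ?thesis using I_fin by simp
qed

lemma inter_adj: "j + 1 = k \<Longrightarrow> k \<le> l \<Longrightarrow> card (I j \<inter> I k) = 1"
proof -
  assume a: "j + 1 = k" "k \<le> l"
  hence "ip N (w j) (w k) = -1" using F(8) by auto
  thus ?thesis using III'[of j k] a by simp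
qed

lemma card_Ik: "k \<in> {1..l} \<Longrightarrow> int (card (I k)) = a ! k"
proof -
  assume k: "k \<in> {1..l}"
  have "a ! k = ip N (w k) (w k)" using F(7) k by simp
  also have "\<dots> = (\<Sum>c=1..N. ip N (w k) (e c) * ip N (w k) (e c))" by (rule ip_expand[OF onb]) (use F(6) k in simp)
  also have "\<dots> = (\<Sum>c=1..N. if c \<in> I k then 1 else 0)"
  proof (rule sum.cong)
    fix c assume c: "c \<in> {1..N}"
    have "\<bar>ip N (w k) (e c)\<bar> \<le> 1" using F(15) k c by blast
    thus "ip N (w k) (e c) * ip N (w k) (e c) = (if c \<in> I k then 1 else 0)"
      unfolding I_def using c abs1_sqr by auto
  qed simp
  also have "\<dots> = int (card (I k))" using I_sub[of k] by (simp add: sum.If_cases Int_absorb1)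
  finally show ?thesis by simp
qed

lemma I0_supp: "I 0 = supp" unfolding I_def supp_def by simp

lemma card_I0: "card (I 0) = t + (if l > 0 then 1 else 0)"
  unfolding I0_supp supp_eq by auto

lemma chain: "m \<le> l \<Longrightarrow> int (card (\<Union>k\<le>m. I k)) = (\<Sum>k\<le>m. int (card (I k))) - int m"
proof (induction m)
  case 0 thus ?case by simp
next
  case (Suc m)
  have U: "(\<Union>k\<le>Suc m. I k) = (\<Union>k\<le>m. I k) \<union> I (Suc m)" by (auto simp: atMost_Suc)
  have int: "(\<Union>k\<le>m. I k) \<inter> I (Suc m) = I m \<inter> I (Suc m)"
  proof
    show "(\<Union>k\<le>m. I k) \<inter> I (Suc m) \<subseteq> I m \<inter> I (Suc m)"
    proof
      fix c assume c: "c \<in> (\<Union>k\<le>m. I k) \<inter> I (Suc m)"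
      then obtain k where k: "k \<le> m" "c \<in> I k" "c \<in> I (Suc m)" by auto
      have "k = m"
      proof (rule ccontr)
        assume "k \<noteq> m"
        hence "I k \<inter> I (Suc m) = {}" using inter_far[of k "Suc m"] k Suc(2) by auto
        thus False using k by auto
      qed
      thus "c \<in> I m \<inter> I (Suc m)" using k by auto
    qed
  qed auto
  have fU: "finite (\<Union>k\<le>m. I k)" using I_fin by auto
  have "card (\<Union>k\<le>m. I k) + card (I (Suc m)) = card ((\<Union>k\<le>m. I k) \<union> I (Suc m)) + card ((\<Union>k\<le>m. I k) \<inter> I (Suc m))"
    by (rule card_Un_Int[OF fU I_fin])
  moreover have "card (I m \<inter> I (Suc m)) = 1" using inter_adj Suc(2) by auto
  ultimately have "int (card (\<Union>k\<le>Suc m. I k)) = int (card (\<Union>k\<le>m. I k)) + int (card (I (Suc m))) - 1"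
    unfolding U int by linarith
  thus ?case using Suc by simp
qed

lemma N_formula: "int N = int t + (if l > 0 then 1 else 0) + (\<Sum>k\<in>{1..l}. a ! k) - int l"
proof -
  have U: "(\<Union>k\<le>l. I k) = {1..N}"
  proof
    show "(\<Union>k\<le>l. I k) \<subseteq> {1..N}" using I_sub by auto
    show "{1..N} \<subseteq> (\<Union>k\<le>l. I k)"
    proof
      fix c assume c: "c \<in> {1..N}"
      then obtain k where "k \<le> l" "ip N (w k) (e c) \<noteq> 0" using F(17) by blast
      thus "c \<in> (\<Union>k\<le>l. I k)" using c unfolding I_def by auto
    qed
  qed
  have "int N = (\<Sum>k\<le>l. int (card (I k))) - int l" using chain[of l] U by simp
  also have "(\<Sum>k\<le>l. int (card (I k))) = int (card (I 0)) + (\<Sum>k\<in>{1..l}. int (card (I k)))"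
  proof -
    have "{..l} = insert 0 {1..l}" by auto
    thus ?thesis by simp
  qed
  also have "(\<Sum>k\<in>{1..l}. int (card (I k))) = (\<Sum>k\<in>{1..l}. a ! k)" using card_Ik by (intro sum.cong) auto
  finally show ?thesis using card_I0 by simp
qed

lemma stable_zero:
  assumes c: "c \<in> {1..N}" "W c \<ge> 2" and k: "k \<in> {1..l}"
  shows "ip N (w k) (e c) = 0"
proof (rule ccontr)
  assume nz: "ip N (w k) (e c) \<noteq> 0"
  have cI: "c \<in> I 0 \<inter> I k" using c nz unfolding I_def by auto
  have k1: "k = 1"
  proof (rule ccontr)
    assume "k \<noteq> 1"
    hence "I 0 \<inter> I k = {}" using inter_far[of 0 k] k by auto
    thus False using cI by auto
  qed
  have "card (I 0 \<inter> I 1) = 1" using inter_adj[of 0 1] k k1 by auto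
  hence I01: "I 0 \<inter> I 1 = {c}" using cI k1 by (metis card_1_singletonE singletonD)
  have "ip N (w 0) (w 1) = -1" using F(8) k k1 by auto
  moreover have "ip N (w 0) (w 1) = (\<Sum>x=1..N. W x * ip N (w 1) (e x))"
    by (rule ip_expand[OF onb]) (use F(6) k k1 in simp)
  moreover have "(\<Sum>x=1..N. W x * ip N (w 1) (e x)) = W c * ip N (w 1) (e c)"
  proof -
    have "(\<Sum>x=1..N. W x * ip N (w 1) (e x)) = W c * ip N (w 1) (e c) + (\<Sum>x\<in>{1..N}-{c}. W x * ip N (w 1) (e x))"
      using c by (simp add: sum.remove)
    moreover have "(\<Sum>x\<in>{1..N}-{c}. W x * ip N (w 1) (e x)) = 0"
    proof (rule sum.neutral, rule ballI)
      fix x assume x: "x \<in> {1..N} - {c}"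
      hence "x \<notin> I 0 \<inter> I 1" using I01 by auto
      thus "W x * ip N (w 1) (e x) = 0" using x unfolding I_def by auto
    qed
    ultimately show ?thesis by simp
  qed
  ultimately have eq: "W c * ip N (w 1) (e c) = -1" by simp
  have "\<bar>ip N (w 1) (e c)\<bar> \<ge> 1" using nz k1 by simp
  moreover have "\<bar>W c\<bar> \<ge> 2" using c by simp
  ultimately have "\<bar>W c\<bar> * \<bar>ip N (w 1) (e c)\<bar> \<ge> 2 * 1" by (intro mult_mono) auto
  hence "\<bar>W c * ip N (w 1) (e c)\<bar> \<ge> 2" by (simp add: abs_mult)
  thus False using eq by simp
qed

definition Ones :: "nat set" where "Ones = {c\<in>{1..N}. W c = 1}"
definition Os :: "nat set" where "Os = {c\<in>{1..N}. W c = 1 \<and> (\<forall>k\<in>{1..l}. ip N (w k) (e c) = 0)}"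

lemma Os_sub: "Os \<subseteq> Ones" unfolding Os_def Ones_def by auto

lemma card_Ones_O: "card Ones \<le> card Os + (if l > 0 then 1 else 0)"
proof -
  have fin: "finite Ones" "finite Os" unfolding Ones_def Os_def by auto
  have "card Ones \<le> card Os + card (Ones - Os)"
    using card_Un_le[of Os "Ones - Os"] Os_sub by (metis Un_Diff_cancel2 sup.absorb_iff1 sup_commute)
  moreover have "card (Ones - Os) \<le> (if l > 0 then 1 else 0)"
  proof (cases "l > 0")
    case False
    hence "Ones - Os = {}" unfolding Ones_def Os_def by auto
    thus ?thesis using False by (simp only: card.empty if_False)
  next
    case True
    have "Ones - Os \<subseteq> I 0 \<inter> I 1"
    proof
      fix c assume c: "c \<in> Ones - Os"
      then obtain k where k: "k \<in> {1..l}" "ip N (w k) (e c) \<noteq> 0" unfolding Ones_def Os_def by auto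
      have cI: "c \<in> I 0 \<inter> I k" using c k unfolding I_def Ones_def by auto
      have "k = 1"
      proof (rule ccontr)
        assume "k \<noteq> 1"
        hence "I 0 \<inter> I k = {}" using inter_far[of 0 k] k by auto
        thus False using cI by auto
      qed
      thus "c \<in> I 0 \<inter> I 1" using cI by simp
    qed
    hence "card (Ones - Os) \<le> card (I 0 \<inter> I 1)" by (intro card_mono) (auto simp: I_fin)
    also have "\<dots> = 1" using inter_adj[of 0 1] True by auto
    finally show ?thesis using True by simp
  qed
  ultimately show ?thesis by simp
qed

definition St :: "nat set" where "St = {c\<in>{1..N}. W c \<ge> 2}"

lemma St_fin: "finite St" unfolding St_def by simp

lemma supp_split: "supp = Ones \<union> St" "Ones \<inter> St = {}"
  unfolding supp_def Ones_def St_def using W_nonneg by force+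

lemma mset_stable: "mset (stable_coeffs \<sigma>) = image_mset W (mset_set St)"
proof -
  have "mset (stable_coeffs \<sigma>) = filter_mset (\<lambda>x. x > 1) (mset \<sigma>)" unfolding stable_coeffs_def by simp
  also have "\<dots> = filter_mset (\<lambda>x. x > 1) (mset \<sigma> + (if l > 0 then {#1#} else {#}))" by simp
  also have "\<dots> = filter_mset (\<lambda>x. x > 1) (image_mset W (mset_set supp))" unfolding MW ..
  also have "\<dots> = image_mset W (mset_set {c\<in>supp. W c > 1})" by (simp add: filter_mset_image_mset supp_def)
  also have "{c\<in>supp. W c > 1} = St" unfolding supp_def St_def by auto
  finally show ?thesis .
qed

lemma stable_sum: "sum_list (map (\<lambda>x. x^2) (stable_coeffs \<sigma>)) = (\<Sum>c\<in>St. (W c)^2)"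
proof -
  have "sum_list (map (\<lambda>x. x^2) (stable_coeffs \<sigma>)) = sum_mset (image_mset (\<lambda>x. x^2) (mset (stable_coeffs \<sigma>)))"
    by (simp flip: sum_mset_sum_list)
  also have "\<dots> = (\<Sum>c\<in>St. (W c)^2)" unfolding mset_stable
    by (simp add: sum_unfold_sum_mset image_mset.compositionality o_def)
  finally show ?thesis .
qed

lemma stable_set: "set (stable_coeffs \<sigma>) = W ` St"
proof -
  have "set (stable_coeffs \<sigma>) = set_mset (mset (stable_coeffs \<sigma>))" by simp
  also have "\<dots> = W ` St" unfolding mset_stable using St_fin by simp
  finally show ?thesis .
qed

lemma stable_max: "c \<in> St \<Longrightarrow> W c \<le> last (stable_coeffs \<sigma>)"
proof -
  assume c: "c \<in> St"
  have "sorted (stable_coeffs \<sigma>)" unfolding stable_coeffs_def using F(11) by (simp add: sorted_wrt_filter)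
  moreover have "W c \<in> set (stable_coeffs \<sigma>)" using stable_set c by simp
  ultimately show ?thesis by (rule sorted_le_last)
qed

lemma stable_empty: "stable_coeffs \<sigma> = [] \<longleftrightarrow> St = {}"
  using stable_set by auto

lemma a0_split: "a ! 0 = int (card Ones) + (\<Sum>c\<in>St. (W c)^2)"
proof -
  have "a ! 0 = (\<Sum>c\<in>supp. (W c)^2)" using a0_eq sum_supp[of "\<lambda>x. x^2"] by simp
  also have "\<dots> = (\<Sum>c\<in>Ones. (W c)^2) + (\<Sum>c\<in>St. (W c)^2)"
    unfolding supp_split(1) by (rule sum.union_disjoint) (use supp_split(2) in \<open>auto simp: Ones_def St_fin\<close>)
  also have "(\<Sum>c\<in>Ones. (W c)^2) = (\<Sum>c\<in>Ones. 1)" unfolding Ones_def by (intro sum.cong) auto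
  finally show ?thesis by simp
qed

lemma MW2: "image_mset W (mset_set supp) = replicate_mset (card Ones) 1 + image_mset W (mset_set St)"
proof -
  have "mset_set supp = mset_set Ones + mset_set St"
    unfolding supp_split(1) by (rule mset_set_Union) (use supp_split(2) in \<open>auto simp: Ones_def St_fin\<close>)
  moreover have "image_mset W (mset_set Ones) = replicate_mset (card Ones) 1"
  proof -
    have "image_mset W (mset_set Ones) = image_mset (\<lambda>_. 1) (mset_set Ones)"
      by (intro image_mset_cong) (auto simp: Ones_def)
    thus ?thesis by (simp add: image_mset_const_eq)
  qed
  ultimately show ?thesis by simp
qed

end



lemma sumA1:
  assumes "finite A" "j \<in> A" "i \<in> A"
  shows "(\<Sum>c\<in>A. ((if c = j then 1 else 0) - (if c = i then 1 else 0)) * (X c :: int)) = X j - X i"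
  using assms by (simp add: left_diff_distrib sum_subtractf sum_delta_mult)

lemma sumA2:
  assumes "finite A" "s \<in> A" "T \<subseteq> A"
  shows "(\<Sum>c\<in>A. ((if c = s then 1 else 0) - (if c \<in> T then 1 else 0)) * (X c :: int)) = X s - (\<Sum>c\<in>T. X c)"
proof -
  have "(\<Sum>c\<in>A. (if c \<in> T then 1 else 0) * X c) = (\<Sum>c\<in>A. if c \<in> T then X c else 0)" by (intro sum.cong) auto
  also have "\<dots> = (\<Sum>c\<in>T. X c)" using assms by (simp add: sum.If_cases Int_absorb1)
  finally show ?thesis using assms by (simp add: left_diff_distrib sum_subtractf sum_delta_mult)
qed

lemma sum_delta_r:
  assumes "finite A" "d \<in> A"
  shows "(\<Sum>x\<in>A. X x * (if x = d then 1 else 0)) = (X d :: int)"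
  using sum_delta_mult[OF assms, of 1 X] by (simp add: mult.commute)

theorem lemma3p5:
  fixes N :: nat and r :: rat and a :: "int list"
    and w w' e e' :: "nat \<Rightarrow> nat \<Rightarrow> int" and \<sigma> \<sigma>' :: "int list"
    and \<phi> :: "(nat \<Rightarrow> int) \<Rightarrow> (nat \<Rightarrow> int)"
  assumes L: "cm_data N r a w e \<sigma>"
    and L': "cm_data N r a w' e' \<sigma>'"
    and phi: "isometric_embedding N (perp N (length a - 1) w) \<phi>"
    and img: "\<phi> ` perp N (length a - 1) w = perp N (length a - 1) w'"
    and bound: "r \<ge> of_int (2 + 2 * (if stable_coeffs \<sigma> = [] then 0 else last (stable_coeffs \<sigma>))
                     + (\<Sum>x\<leftarrow>stable_coeffs \<sigma>. x ^ 2))"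
  shows "\<sigma> = \<sigma>'"
proof -
  interpret S: cm N r a w e \<sigma> by (rule cm.intro) (rule L)
  interpret T: cm N r a w' e' \<sigma>' by (rule cm.intro) (rule L')
  have tt: "length \<sigma> = length \<sigma>'" using S.N_formula T.N_formula by simp
  show ?thesis
  proof (cases "stable_coeffs \<sigma> = []")
    case True
    have s1: "\<forall>x\<in>set \<sigma>. x = 1"
    proof
      fix x assume x: "x \<in> set \<sigma>"
      have "x > 0" using S.F(12) x by blast
      moreover have "\<not> x > 1" using True x unfolding stable_coeffs_def by (simp add: filter_empty_conv)
      ultimately show "x = 1" by simp
    qed
    hence sig: "\<sigma> = replicate (length \<sigma>) 1" by (simp add: replicate_length_same)
    have "sum_list (map (\<lambda>x. x^2) \<sigma>') = sum_list (map (\<lambda>x. x^2) \<sigma>)" using S.a0_list T.a0_list by simp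
    also have "\<dots> = int (length \<sigma>)" by (subst sig) (simp add: sum_list_replicate)
    finally have "\<sigma>' = replicate (length \<sigma>') 1" using sumsq_len[of \<sigma>'] T.F(12) tt by force
    thus ?thesis using sig tt by simp
  next
    case False
    define M where "M = last (stable_coeffs \<sigma>)"
    define SS where "SS = (\<Sum>c\<in>S.St. (S.W c)^2)"
    have Stne: "S.St \<noteq> {}" using False S.stable_empty by simp
    have bd: "r \<ge> of_int (2 + 2*M + SS)" using bound False S.stable_sum unfolding M_def SS_def by simp
    have WM: "\<forall>c\<in>S.St. S.W c \<le> M" using S.stable_max unfolding M_def by blast
    have St_ge2: "\<forall>c\<in>S.St. S.W c \<ge> 2" unfolding S.St_def by auto
    have St_A: "S.St \<subseteq> {1..N}" unfolding S.St_def by auto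
    have M2: "M \<ge> 2" using Stne WM St_ge2 by force
    have a0S: "a ! 0 = int (card S.Ones) + SS" using S.a0_split unfolding SS_def .
    have cOs: "int (card S.Os) \<ge> 2 + 2*M"
    proof (cases "length a - 1 > 0")
      case True
      have "(of_int (2 + 2*M + SS) :: rat) < of_int (a ! 0)" by (rule le_less_trans[OF bd S.r_le(2)[OF True]])
      hence "2 + 2*M + SS < a ! 0" by (simp only: of_int_less_iff)
      thus ?thesis using a0S S.card_Ones_O True by simp
    next
      case False
      have "(of_int (2 + 2*M + SS) :: rat) \<le> of_int (a ! 0)" by (rule order_trans[OF bd S.r_le(1)])
      hence "2 + 2*M + SS \<le> a ! 0" by (simp only: of_int_le_iff)
      thus ?thesis using a0S S.card_Ones_O False by simp
    qed
    have finOs: "finite S.Os" unfolding S.Os_def by simp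
    have OsA: "S.Os \<subseteq> {1..N}" unfolding S.Os_def by auto
    have Os_W: "\<forall>c\<in>S.Os. S.W c = 1" unfolding S.Os_def by auto
    have Os_k: "\<forall>c\<in>S.Os. \<forall>k\<in>{1..length a - 1}. ip N (w k) (e c) = 0" unfolding S.Os_def by auto
    have StOs: "\<forall>s\<in>S.St. s \<notin> S.Os" using Os_W St_ge2 by force
    have "card S.Os > 0" using cOs M2 by linarith
    then obtain i0 where i0: "i0 \<in> S.Os" by (metis card_gt_0_iff ex_in_conv)
    define J where "J = S.Os - {i0}"
    have JOs: "J \<subseteq> S.Os" "i0 \<notin> J" "finite J" unfolding J_def using finOs by auto
    have cJ: "int (card J) = int (card S.Os) - 1" using i0 finOs \<open>card S.Os > 0\<close> unfolding J_def
      by (simp add: card_Diff_singleton of_nat_diff)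
    have "\<forall>s\<in>S.St. \<exists>X. X \<subseteq> J \<and> card X = nat (S.W s)"
    proof
      fix s assume s: "s \<in> S.St"
      have "int (nat (S.W s)) \<le> int (card J)" using WM s St_ge2 cJ cOs by auto
      hence "nat (S.W s) \<le> card J" by linarith
      thus "\<exists>X. X \<subseteq> J \<and> card X = nat (S.W s)" by (metis obtain_subset_with_card_n)
    qed
    then obtain T where T: "\<forall>s\<in>S.St. T s \<subseteq> J \<and> card (T s) = nat (S.W s)" by metis
    have Tfin: "finite (T s)" if "s \<in> S.St" for s using T that JOs(3) finite_subset by blast
    have cT: "int (card (T s)) = S.W s" if "s \<in> S.St" for s using T that St_ge2 by auto
    define kv where "kv j = (\<lambda>c. (if c = j then 1 else 0) - (if c = i0 then (1::int) else 0))" for j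
    define ky where "ky s = (\<lambda>c. (if c = s then 1 else 0) - (if c \<in> T s then (1::int) else 0))" for s
    define v where "v j = mkv N e (kv j)" for j
    define y where "y s = mkv N e (ky s)" for s
    let ?L = "perp N (length a - 1) w"
    have ipw: "ip N (mkv N e \<kappa>) (w k) = (\<Sum>c\<in>{1..N}. \<kappa> c * ip N (w k) (e c))" for \<kappa> k
      by (subst ip_sym) (rule ip_mkv)
    have vL: "v j \<in> ?L" if j: "j \<in> J" for j
    proof -
      have jA: "j \<in> {1..N}" "i0 \<in> {1..N}" using j JOs OsA i0 by auto
      have "ip N (v j) (w k) = 0" if k: "k \<le> length a - 1" for k
      proof -
        have "ip N (v j) (w k) = ip N (w k) (e j) - ip N (w k) (e i0)"
          unfolding v_def kv_def ipw by (rule sumA1) (use jA in auto)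
        also have "\<dots> = 0"
        proof (cases "k = 0")
          case True thus ?thesis using Os_W j JOs i0 by auto
        next
          case False thus ?thesis using Os_k j JOs i0 k by auto
        qed
        finally show ?thesis .
      qed
      thus ?thesis unfolding perp_def v_def using mkv_ZN[OF S.onb] by (auto simp: v_def)
    qed
    have yL: "y s \<in> ?L" if s: "s \<in> S.St" for s
    proof -
      have "T s \<subseteq> J" using T s by blast
      hence sA: "s \<in> {1..N}" "T s \<subseteq> {1..N}" using s St_A JOs OsA by auto
      have "ip N (y s) (w k) = 0" if k: "k \<le> length a - 1" for k
      proof -
        have "ip N (y s) (w k) = ip N (w k) (e s) - (\<Sum>c\<in>T s. ip N (w k) (e c))"
          unfolding y_def ky_def ipw by (rule sumA2) (use sA in auto)
        also have "\<dots> = 0"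
        proof (cases "k = 0")
          case True
          have "(\<Sum>c\<in>T s. ip N (w k) (e c)) = (\<Sum>c\<in>T s. 1)" using True Os_W T s JOs by (intro sum.cong) auto
          thus ?thesis using True cT[OF s] by simp
        next
          case False
          have "(\<Sum>c\<in>T s. ip N (w k) (e c)) = 0"
          proof (rule sum.neutral, rule ballI)
            fix c assume c: "c \<in> T s"
            hence "c \<in> S.Os" using T s JOs by blast
            moreover have "k \<in> {1..length a - 1}" using False k by auto
            ultimately show "ip N (w k) (e c) = 0" using Os_k by blast
          qed
          moreover have "ip N (w k) (e s) = 0" using S.stable_zero[of s k] sA s St_ge2 False k by auto
          ultimately show ?thesis by simp
        qed
        finally show ?thesis .
      qed
      thus ?thesis unfolding perp_def using mkv_ZN[OF S.onb] by (auto simp: y_def)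
    qed
    have JA: "J \<subseteq> {1..N}" "i0 \<in> {1..N}" using JOs OsA i0 by auto
    have TJ: "T s \<subseteq> J" if "s \<in> S.St" for s using T that by blast
    have ivv: "ip N (v j) (v k) = (if j = k then 2 else 1)" if jk: "j \<in> J" "k \<in> J" for j k
    proof -
      have "ip N (v j) (v k) = (\<Sum>c\<in>{1..N}. kv j c * kv k c)" unfolding v_def by (rule ip_mkv_mkv[OF S.onb])
      also have "\<dots> = kv k j - kv k i0" unfolding kv_def[of j] by (rule sumA1) (use jk JA in auto)
      also have "\<dots> = (if j = k then 2 else 1)" using jk JOs unfolding kv_def by auto
      finally show ?thesis .
    qed
    have iyv: "ip N (y s) (v j) = (if j \<in> T s then -1 else 0)" if sj: "s \<in> S.St" "j \<in> J" for s j
    proof -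
      have sA: "s \<in> {1..N}" "T s \<subseteq> {1..N}" using sj St_A TJ JA by auto
      have "ip N (y s) (v j) = (\<Sum>c\<in>{1..N}. ky s c * kv j c)" unfolding v_def y_def by (rule ip_mkv_mkv[OF S.onb])
      also have "\<dots> = kv j s - (\<Sum>c\<in>T s. kv j c)" unfolding ky_def[of s] by (rule sumA2) (use sA in auto)
      also have "kv j s = 0" using sj StOs JOs i0 unfolding kv_def by auto
      also have "(\<Sum>c\<in>T s. kv j c) = (\<Sum>c\<in>T s. (if c = j then 1 else 0))"
        using TJ[OF sj(1)] JOs unfolding kv_def by (intro sum.cong) auto
      also have "\<dots> = (if j \<in> T s then 1 else 0)" using Tfin[OF sj(1)] by simp
      finally show ?thesis by simp
    qed
    have iyy: "ip N (y s) (y s') = (if s = s' then S.W s + 1 else int (card (T s \<inter> T s')))"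
      if ss: "s \<in> S.St" "s' \<in> S.St" for s s'
    proof -
      have sA: "s \<in> {1..N}" "T s \<subseteq> {1..N}" using ss St_A TJ JA by auto
      have ns: "s \<notin> T s'" "s' \<notin> T s" using ss TJ JOs StOs by blast+
      have "ip N (y s) (y s') = (\<Sum>c\<in>{1..N}. ky s c * ky s' c)" unfolding y_def by (rule ip_mkv_mkv[OF S.onb])
      also have "\<dots> = ky s' s - (\<Sum>c\<in>T s. ky s' c)" unfolding ky_def[of s] by (rule sumA2) (use sA in auto)
      also have "ky s' s = (if s = s' then 1 else 0)" using ns unfolding ky_def by auto
      also have "(\<Sum>c\<in>T s. ky s' c) = (\<Sum>c\<in>T s. (if s = s' then -1 else if c \<in> T s' then -1 else 0))"
        using ns unfolding ky_def by (intro sum.cong) auto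
      also have "\<dots> = (if s = s' then - int (card (T s)) else - int (card (T s \<inter> T s')))"
        using Tfin[OF ss(1)] by (simp add: sum.If_cases Int_commute)
      finally show ?thesis using cT[OF ss(1)] by auto
    qed
    define cv where "cv x = (\<lambda>d. ip N x (e' d))" for x
    have phiZ: "\<phi> x \<in> ZN N" if "x \<in> ?L" for x using phi that unfolding isometric_embedding_def by blast
    have phiip: "ip N (\<phi> x) (\<phi> x') = ip N x x'" if "x \<in> ?L" "x' \<in> ?L" for x x'
      using phi that unfolding isometric_embedding_def by blast
    have tip: "ip N (\<phi> x) (\<phi> x') = (\<Sum>d\<in>{1..N}. cv (\<phi> x) d * cv (\<phi> x') d)" if "x' \<in> ?L" for x x'
      unfolding cv_def by (rule ip_expand[OF T.onb phiZ[OF that]])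
    have phiL': "\<phi> x \<in> perp N (length a - 1) w'" if "x \<in> ?L" for x using img that by blast
    have torth: "(\<Sum>d\<in>{1..N}. cv (\<phi> x) d * ip N (w' m) (e' d)) = 0" if "x \<in> ?L" "m \<le> length a - 1" for x m
    proof -
      have "ip N (\<phi> x) (w' m) = 0" using phiL'[OF that(1)] that(2) unfolding perp_def by blast
      moreover have "ip N (\<phi> x) (w' m) = (\<Sum>d\<in>{1..N}. cv (\<phi> x) d * ip N (w' m) (e' d))"
        unfolding cv_def by (rule ip_expand[OF T.onb]) (use T.F(6) that(2) in blast)
      ultimately show ?thesis by simp
    qed
    define u where "u j = cv (\<phi> (v j))" for j
    define zz where "zz s = cv (\<phi> (y s))" for s
    have uip: "(\<Sum>d\<in>{1..N}. u j d * u k d) = (if j = k then 2 else 1)" if "j \<in> J" "k \<in> J" for j k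
      using tip[OF vL[OF that(2)], of "v j"] phiip[OF vL[OF that(1)] vL[OF that(2)]] ivv[OF that] unfolding u_def by simp
    have un: "\<forall>j\<in>J. (\<Sum>d\<in>{1..N}. (u j d)^2) = 2" using uip by (simp add: power2_eq_square)
    have ui: "\<forall>j\<in>J. \<forall>k\<in>J. j \<noteq> k \<longrightarrow> (\<Sum>d\<in>{1..N}. u j d * u k d) = 1" using uip by simp
    have cJ4: "card J \<ge> 4" using cJ cOs M2 by linarith
    obtain p \<alpha> h \<beta> where pA: "p \<in> {1..N}" and a1: "\<bar>\<alpha>\<bar> = 1" and hinj: "inj_on h J"
      and hb: "\<forall>j\<in>J. h j \<in> {1..N} \<and> h j \<noteq> p \<and> \<bar>\<beta> j\<bar> = 1 \<and> (\<forall>x\<in>{1..N}. u j x = pt \<alpha> p (\<beta> j) (h j) x)"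
      using pivot[OF _ JOs(3) cJ4 un ui] by blast
    have zip: "(\<Sum>d\<in>{1..N}. zz s d * zz s' d) = ip N (y s) (y s')" if "s \<in> S.St" "s' \<in> S.St" for s s'
      using tip[OF yL[OF that(2)], of "y s"] phiip[OF yL[OF that(1)] yL[OF that(2)]] unfolding zz_def by simp
    have zu: "(\<Sum>d\<in>{1..N}. zz s d * u j d) = (if j \<in> T s then -1 else 0)" if "s \<in> S.St" "j \<in> J" for s j
      using tip[OF vL[OF that(2)], of "y s"] phiip[OF yL[OF that(1)] vL[OF that(2)]] iyv[OF that] unfolding zz_def u_def by simp
    have "\<forall>s\<in>S.St. \<exists>g \<gamma>. g \<in> {1..N} \<and> g \<noteq> p \<and> g \<notin> h`J \<and> \<bar>\<gamma>\<bar> = 1 \<and>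
           (\<forall>Y. (\<Sum>x\<in>{1..N}. zz s x * Y x) = \<gamma> * Y g - (\<Sum>j\<in>T s. \<beta> j * Y (h j)))"
    proof
      fix s assume s: "s \<in> S.St"
      have c1: "int (card (T s)) = S.W s" by (rule cT[OF s])
      have c2: "int (card J) \<ge> 2 * S.W s + 1" using cJ cOs WM s by auto
      have nz: "(\<Sum>x\<in>{1..N}. (zz s x)^2) = S.W s + 1" using zip[OF s s] iyy[OF s s] by (simp add: power2_eq_square)
      have iz: "\<forall>j\<in>J. (\<Sum>x\<in>{1..N}. zz s x * u j x) = (if j \<in> T s then -1 else 0)" using zu s by blast
      show "\<exists>g \<gamma>. g \<in> {1..N} \<and> g \<noteq> p \<and> g \<notin> h`J \<and> \<bar>\<gamma>\<bar> = 1 \<and>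
           (\<forall>Y. (\<Sum>x\<in>{1..N}. zz s x * Y x) = \<gamma> * Y g - (\<Sum>j\<in>T s. \<beta> j * Y (h j)))"
        by (rule stab[OF _ pA a1 hinj JOs(3) hb TJ[OF s] c1 c2 nz iz]) simp
    qed
    from bchoice[OF this] obtain g where "\<forall>s\<in>S.St. \<exists>\<gamma>. g s \<in> {1..N} \<and> g s \<noteq> p \<and> g s \<notin> h`J \<and> \<bar>\<gamma>\<bar> = 1 \<and>
           (\<forall>Y. (\<Sum>x\<in>{1..N}. zz s x * Y x) = \<gamma> * Y (g s) - (\<Sum>j\<in>T s. \<beta> j * Y (h j)))"
      by (rule exE)
    from bchoice[OF this] obtain \<gamma> where g: "\<forall>s\<in>S.St. g s \<in> {1..N} \<and> g s \<noteq> p \<and> g s \<notin> h`J \<and> \<bar>\<gamma> s\<bar> = 1 \<and>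
           (\<forall>Y. (\<Sum>x\<in>{1..N}. zz s x * Y x) = \<gamma> s * Y (g s) - (\<Sum>j\<in>T s. \<beta> j * Y (h j)))"
      by (rule exE)
    define Wm where "Wm m d = ip N (w' m) (e' d)" for m d
    have hbj: "h j \<in> {1..N}" "h j \<noteq> p" "\<bar>\<beta> j\<bar> = 1" "\<forall>x\<in>{1..N}. u j x = pt \<alpha> p (\<beta> j) (h j) x" if "j \<in> J" for j
      using hb that by auto
    have gs: "g s \<in> {1..N}" "g s \<noteq> p" "g s \<notin> h`J" "\<bar>\<gamma> s\<bar> = 1"
      "\<And>Y. (\<Sum>x\<in>{1..N}. zz s x * Y x) = \<gamma> s * Y (g s) - (\<Sum>j\<in>T s. \<beta> j * Y (h j))" if "s \<in> S.St" for s
      using g that by auto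
    have uorth: "\<alpha> * Wm m p + \<beta> j * Wm m (h j) = 0" if "j \<in> J" "m \<le> length a - 1" for j m
    proof -
      have "(\<Sum>d\<in>{1..N}. u j d * Wm m d) = 0" using torth[OF vL[OF that(1)] that(2)] unfolding u_def Wm_def .
      moreover have "(\<Sum>d\<in>{1..N}. u j d * Wm m d) = \<alpha> * Wm m p + \<beta> j * Wm m (h j)"
        by (rule ip_rep[OF _ pA hbj(1)[OF that(1)] hbj(2)[OF that(1), symmetric] hbj(4)[OF that(1)]]) simp
      ultimately show ?thesis by simp
    qed
    have zorth: "\<gamma> s * Wm m (g s) - (\<Sum>j\<in>T s. \<beta> j * Wm m (h j)) = 0" if "s \<in> S.St" "m \<le> length a - 1" for s m
      using torth[OF yL[OF that(1)] that(2)] gs(5)[OF that(1), of "Wm m"] unfolding zz_def Wm_def by simp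
    have sumT: "(\<Sum>j\<in>T s. \<beta> j * Wm m (h j)) = - S.W s * (\<alpha> * Wm m p)" if "s \<in> S.St" "m \<le> length a - 1" for s m
    proof -
      have "(\<Sum>j\<in>T s. \<beta> j * Wm m (h j)) = (\<Sum>j\<in>T s. - (\<alpha> * Wm m p))"
        using uorth TJ[OF that(1)] that(2) by (intro sum.cong) (auto simp: eq_neg_iff_add_eq_0 add.commute)
      also have "\<dots> = - int (card (T s)) * (\<alpha> * Wm m p)" by simp
      finally show ?thesis using cT[OF that(1)] by simp
    qed
    obtain s0 where s0: "s0 \<in> S.St" using Stne by blast
    have p_zero: "Wm m p = 0" if m: "m \<in> {1..length a - 1}" for m
    proof (rule ccontr)
      assume nz: "Wm m p \<noteq> 0"
      have ml: "m \<le> length a - 1" using m by auto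
      have e1: "\<gamma> s0 * Wm m (g s0) = - S.W s0 * (\<alpha> * Wm m p)" using zorth[OF s0 ml] sumT[OF s0 ml] by simp
      have "\<bar>Wm m (g s0)\<bar> \<le> 1" using T.F(15) m gs(1)[OF s0] unfolding Wm_def by blast
      hence "\<bar>\<gamma> s0 * Wm m (g s0)\<bar> \<le> 1" using gs(4)[OF s0] by (simp add: abs_mult)
      moreover have "\<bar>- S.W s0 * (\<alpha> * Wm m p)\<bar> = S.W s0 * \<bar>Wm m p\<bar>"
      proof -
        have "S.W s0 \<ge> 2" using St_ge2 s0 by blast
        thus ?thesis using a1 by (simp add: abs_mult)
      qed
      moreover have "S.W s0 * \<bar>Wm m p\<bar> \<ge> 2 * 1" using St_ge2 s0 nz by (intro mult_mono) auto
      ultimately show False using e1 by simp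
    qed
    define lm where "lm = T.W p"
    have lam: "lm \<ge> 1"
    proof -
      obtain m where m: "m \<le> length a - 1" "Wm m p \<noteq> 0" using T.F(17) pA unfolding Wm_def by blast
      have "m = 0" using p_zero m by (cases m) auto
      hence "lm \<noteq> 0" using m unfolding lm_def Wm_def by simp
      moreover have "lm \<ge> 0" using T.W_nonneg pA unfolding lm_def by blast
      ultimately show ?thesis by simp
    qed
    have Wh: "T.W (h j) = lm" "\<beta> j = - \<alpha>" if j: "j \<in> J" for j
    proof -
      have e: "\<beta> j * T.W (h j) = - (\<alpha> * lm)" using uorth[OF j, of 0] unfolding Wm_def lm_def by simp
      have nn: "T.W (h j) \<ge> 0" using T.W_nonneg hbj(1)[OF j] by blast
      have "\<bar>\<beta> j * T.W (h j)\<bar> = T.W (h j)" using hbj(3)[OF j] nn by (simp add: abs_mult)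
      moreover have "\<bar>- (\<alpha> * lm)\<bar> = lm" using a1 lam by (simp add: abs_mult)
      ultimately show W: "T.W (h j) = lm" using e by simp
      have "\<beta> j * lm = (- \<alpha>) * lm" using e W by simp
      thus "\<beta> j = - \<alpha>" using lam by (simp only: mult_right_cancel)
    qed
    have Wg: "T.W (g s) = lm * S.W s" if s: "s \<in> S.St" for s
    proof -
      have e: "\<gamma> s * T.W (g s) = - S.W s * (\<alpha> * lm)" using zorth[OF s, of 0] sumT[OF s, of 0] unfolding Wm_def lm_def by simp
      have nn: "T.W (g s) \<ge> 0" using T.W_nonneg gs(1)[OF s] by blast
      have "\<bar>\<gamma> s * T.W (g s)\<bar> = T.W (g s)" using gs(4)[OF s] nn by (simp add: abs_mult)
      moreover have "\<bar>- S.W s * (\<alpha> * lm)\<bar> = lm * S.W s"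
      proof -
        have "S.W s \<ge> 2" using St_ge2 s by blast
        thus ?thesis using a1 lam by (simp add: abs_mult)
      qed
      ultimately show ?thesis using e by simp
    qed
    have zpt: "zz s d = \<gamma> s * (if g s = d then 1 else 0) - (\<Sum>j\<in>T s. \<beta> j * (if h j = d then 1 else 0))"
      if s: "s \<in> S.St" and d: "d \<in> {1..N}" for s d
    proof -
      have "(\<Sum>x\<in>{1..N}. zz s x * (if x = d then 1 else 0)) = zz s d" by (rule sum_delta_r) (use d in auto)
      thus ?thesis using gs(5)[OF s, of "\<lambda>x. if x = d then 1 else 0"] by simp
    qed
    have zh: "zz s (h j) = - (if j \<in> T s then \<beta> j else 0)" if s: "s \<in> S.St" and j: "j \<in> J" for s j
    proof -
      have "g s \<noteq> h j" using gs(3)[OF s] j by blast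
      moreover have "(\<Sum>i\<in>T s. \<beta> i * (if h i = h j then 1 else 0)) = (\<Sum>i\<in>T s. if i = j then \<beta> j else 0)"
      proof (rule sum.cong)
        fix i assume "i \<in> T s"
        hence "i \<in> J" using TJ[OF s] by blast
        hence "h i = h j \<longleftrightarrow> i = j" using hinj j by (auto dest: inj_onD)
        thus "\<beta> i * (if h i = h j then 1 else 0) = (if i = j then \<beta> j else 0)" by auto
      qed simp
      moreover have "(\<Sum>i\<in>T s. if i = j then \<beta> j else 0) = (if j \<in> T s then \<beta> j else 0)"
        using Tfin[OF s] by (simp add: sum.delta')
      ultimately show ?thesis using zpt[OF s hbj(1)[OF j]] by simp
    qed
    have zg: "zz s (g s) = \<gamma> s" if s: "s \<in> S.St" for s
    proof -
      have "(\<Sum>i\<in>T s. \<beta> i * (if h i = g s then 1 else 0)) = 0"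
      proof (rule sum.neutral, rule ballI)
        fix i assume "i \<in> T s"
        hence "i \<in> J" using TJ[OF s] by blast
        hence "h i \<in> h ` J" by (rule imageI)
        hence "h i \<noteq> g s" using gs(3)[OF s] by metis
        thus "\<beta> i * (if h i = g s then 1 else 0) = 0" by simp
      qed
      thus ?thesis using zpt[OF s gs(1)[OF s]] by simp
    qed
    have ginj: "inj_on g S.St"
    proof (rule inj_onI, rule ccontr)
      fix s s' assume ss: "s \<in> S.St" "s' \<in> S.St" "g s = g s'" "s \<noteq> s'"
      have "(\<Sum>d\<in>{1..N}. zz s d * zz s' d) = \<gamma> s * zz s' (g s) - (\<Sum>j\<in>T s. \<beta> j * zz s' (h j))"
        by (rule gs(5)[OF ss(1)])
      also have "(\<Sum>j\<in>T s. \<beta> j * zz s' (h j)) = (\<Sum>j\<in>T s. - (if j \<in> T s' then 1 else 0))"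
      proof (rule sum.cong)
        fix j assume "j \<in> T s"
        hence j: "j \<in> J" using TJ[OF ss(1)] by blast
        have "\<beta> j * \<beta> j = 1" using abs1_sq hbj(3)[OF j] by blast
        thus "\<beta> j * zz s' (h j) = - (if j \<in> T s' then 1 else 0)" using zh[OF ss(2) j] by auto
      qed simp
      also have "\<dots> = - int (card (T s \<inter> T s'))" using Tfin[OF ss(1)] by (simp add: sum_negf sum.If_cases)
      finally have "(\<Sum>d\<in>{1..N}. zz s d * zz s' d) = \<gamma> s * zz s' (g s) + int (card (T s \<inter> T s'))" by simp
      moreover have "(\<Sum>d\<in>{1..N}. zz s d * zz s' d) = int (card (T s \<inter> T s'))" using zip[OF ss(1,2)] iyy[OF ss(1,2)] ss(4) by simp
      ultimately have "\<gamma> s * zz s' (g s) = 0" by simp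
      moreover have "zz s' (g s) = \<gamma> s'" using zg[OF ss(2)] ss(3) by simp
      ultimately show False using gs(4)[OF ss(1)] gs(4)[OF ss(2)] by auto
    qed
    define R where "R = {1..N} - ({p} \<union> h`J)"
    define R2 where "R2 = R - g`S.St"
    define E where "E = (\<Sum>x\<in>R2. (T.W x)^2)"
    have hb': "\<forall>j\<in>J. h j \<in> {1..N} \<and> h j \<noteq> p" using hbj by blast
    have gR: "g`S.St \<subseteq> R"
    proof
      fix x assume "x \<in> g`S.St"
      then obtain s where s: "s \<in> S.St" "x = g s" by blast
      show "x \<in> R" unfolding R_def using gs(1,2,3)[OF s(1)] s(2) by simp
    qed
    have finR: "finite R" unfolding R_def by simp
    have dec: "(\<Sum>x\<in>{1..N}. (T.W x)^2) = (T.W p)^2 + (\<Sum>j\<in>J. (T.W (h j))^2) + (\<Sum>x\<in>R. (T.W x)^2)"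
      unfolding R_def by (rule decomp[OF _ pA hinj hb']) simp
    have decR: "(\<Sum>x\<in>R. (T.W x)^2) = E + (\<Sum>x\<in>g`S.St. (T.W x)^2)"
      unfolding E_def R2_def using sum.subset_diff[OF gR finR] by simp
    have sg: "(\<Sum>x\<in>g`S.St. (T.W x)^2) = lm^2 * SS"
    proof -
      have "(\<Sum>x\<in>g`S.St. (T.W x)^2) = (\<Sum>s\<in>S.St. (T.W (g s))^2)" by (rule sum.reindex[OF ginj, unfolded comp_def])
      also have "\<dots> = (\<Sum>s\<in>S.St. lm^2 * (S.W s)^2)" using Wg by (intro sum.cong) (auto simp: power_mult_distrib)
      finally show ?thesis unfolding SS_def by (simp add: sum_distrib_left)
    qed
    have sJ: "(\<Sum>j\<in>J. (T.W (h j))^2) = int (card J) * lm^2" using Wh by simp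
    have Enn: "E \<ge> 0" unfolding E_def by (simp add: sum_nonneg)
    have a0T: "a ! 0 = lm^2 + int (card J) * lm^2 + lm^2 * SS + E"
      using T.a0_eq dec decR sg sJ unfolding lm_def by simp
    have cO0: "card S.Ones \<le> card S.Os + 1" using S.card_Ones_O by (simp split: if_splits)
    have cO: "int (card S.Ones) \<le> int (card J) + 2" using cO0 cJ by linarith
    have SSnn: "SS \<ge> 0" unfolding SS_def by (simp add: sum_nonneg)
    have lm1: "lm = 1"
    proof (rule ccontr)
      assume "lm \<noteq> 1"
      hence "lm \<ge> 2" using lam by simp
      hence "lm^2 \<ge> 2^2" by (rule power_mono) simp
      hence l4: "lm^2 \<ge> 4" by simp
      have "lm^2 * (1 + int (card J) + SS) \<ge> 4 * (1 + int (card J) + SS)"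
        using l4 SSnn by (intro mult_right_mono) auto
      hence "a ! 0 \<ge> 4 * (1 + int (card J) + SS)" using a0T Enn by (simp add: algebra_simps)
      moreover have "a ! 0 \<le> int (card J) + 2 + SS" using a0S cO by simp
      ultimately show False using SSnn by simp
    qed
    have Eval: "E = int (card S.Ones) - int (card S.Os)" using a0T a0S lm1 cJ by simp
    have E1: "E \<le> 1" using Eval cO0 by linarith
    define Q where "Q = {x\<in>R2. T.W x \<noteq> 0}"
    have finR2: "finite R2" unfolding R2_def using finR by simp
    have R2A: "R2 \<subseteq> {1..N}" unfolding R2_def R_def by auto
    have W01: "T.W x = 0 \<or> T.W x = 1" if x: "x \<in> R2" for x
    proof -
      have "(T.W x)^2 \<le> E" unfolding E_def by (rule member_le_sum) (use x finR2 in auto)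
      hence "(T.W x)^2 \<le> 1" using E1 by simp
      moreover have "T.W x \<ge> 0" using T.W_nonneg x R2A by blast
      ultimately show ?thesis using abs1_sqr by (metis abs_le_square_iff abs_of_nonneg not_le one_power2 zero_le_one le_antisym int_one_le_iff_zero_less le_less)
    qed
    have EQ: "E = int (card Q)"
    proof -
      have "E = (\<Sum>x\<in>R2. if x \<in> Q then 1 else 0)" unfolding E_def
      proof (rule sum.cong)
        fix x assume x: "x \<in> R2"
        show "(T.W x)^2 = (if x \<in> Q then 1 else 0)" using W01[OF x] x unfolding Q_def by auto
      qed simp
      also have "\<dots> = int (card Q)" unfolding Q_def using finR2 by (simp add: sum.If_cases Int_def)
      finally show ?thesis .
    qed
    define P1 where "P1 = ({p} \<union> h`J) \<union> Q"
    have finQ: "finite Q" unfolding Q_def using finR2 by simp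
    have cP1: "card P1 = card S.Ones"
    proof -
      have d1: "p \<notin> h`J" using hb' by auto
      have "({p} \<union> h`J) \<inter> Q = {}" unfolding Q_def R2_def R_def by auto
      hence "card P1 = card ({p} \<union> h`J) + card Q" unfolding P1_def
        by (rule card_Un_disjoint[rotated 2]) (use finQ JOs(3) in auto)
      also have "card ({p} \<union> h`J) = 1 + card J" using d1 JOs(3) card_image[OF hinj] by simp
      finally have "int (card P1) = 1 + int (card J) + E" using EQ by simp
      thus ?thesis using Eval cJ by simp
    qed
    have P1W: "\<forall>x\<in>P1. T.W x = 1" unfolding P1_def Q_def using Wh lm1 W01 pA unfolding lm_def by auto
    have Tsupp: "T.supp = P1 \<union> g`S.St"
    proof
      show "T.supp \<subseteq> P1 \<union> g`S.St"
      proof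
        fix x assume x: "x \<in> T.supp"
        hence xA: "x \<in> {1..N}" "T.W x \<noteq> 0" unfolding T.supp_def by auto
        show "x \<in> P1 \<union> g`S.St"
        proof (cases "x \<in> g`S.St")
          case False
          thus ?thesis using xA unfolding P1_def Q_def R2_def R_def by auto
        qed simp
      qed
      show "P1 \<union> g`S.St \<subseteq> T.supp"
      proof
        fix x assume x: "x \<in> P1 \<union> g`S.St"
        show "x \<in> T.supp"
        proof (cases "x \<in> P1")
          case True
          have "x \<in> {1..N}" using True pA hb' unfolding P1_def Q_def R2_def R_def by auto
          thus ?thesis using P1W True unfolding T.supp_def by auto
        next
          case False
          then obtain s where s: "s \<in> S.St" "x = g s" using x by auto
          have "T.W x = S.W s" using Wg[OF s(1)] lm1 s(2) by simp
          thus ?thesis using s gs(1)[OF s(1)] St_ge2 unfolding T.supp_def by auto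
        qed
      qed
    qed
    have disj: "P1 \<inter> g`S.St = {}" unfolding P1_def Q_def R2_def using gs by auto
    have finP1: "finite P1" unfolding P1_def using finQ JOs(3) by simp
    have "image_mset T.W (mset_set T.supp) = image_mset T.W (mset_set P1) + image_mset T.W (mset_set (g`S.St))"
      unfolding Tsupp using disj finP1 S.St_fin by (simp add: mset_set_Union)
    also have "image_mset T.W (mset_set P1) = replicate_mset (card S.Ones) 1"
    proof -
      have "image_mset T.W (mset_set P1) = image_mset (\<lambda>_. 1) (mset_set P1)"
        using P1W finP1 by (intro image_mset_cong) auto
      thus ?thesis using cP1 by (simp add: image_mset_const_eq)
    qed
    also have "image_mset T.W (mset_set (g`S.St)) = image_mset S.W (mset_set S.St)"
    proof -
      have "mset_set (g`S.St) = image_mset g (mset_set S.St)" by (rule image_mset_mset_set[OF ginj, symmetric])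
      hence "image_mset T.W (mset_set (g`S.St)) = image_mset (\<lambda>s. T.W (g s)) (mset_set S.St)"
        by (simp add: image_mset.compositionality o_def)
      also have "\<dots> = image_mset S.W (mset_set S.St)" using Wg lm1 S.St_fin by (intro image_mset_cong) auto
      finally show ?thesis .
    qed
    also have "replicate_mset (card S.Ones) 1 + image_mset S.W (mset_set S.St) = image_mset S.W (mset_set S.supp)"
      using S.MW2 by simp
    finally have "mset \<sigma>' + (if length a - 1 > 0 then {#1#} else {#}) = mset \<sigma> + (if length a - 1 > 0 then {#1#} else {#})"
      using S.MW T.MW by simp
    hence ms: "mset \<sigma>' = mset \<sigma>" by simp
    have "sort \<sigma> = \<sigma>'" by (rule properties_for_sort[OF ms T.F(11)])
    moreover have "sort \<sigma> = \<sigma>" by (rule sorted_sort_id[OF S.F(11)])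
    ultimately show ?thesis by simp
  qed
qed

end
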